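(* For every $\xi\in\mathbb R$, $$\lim_{n\to\infty}\frac12\sum_{l=0}^{n}e^{i\xi(n-2l)/n}\Big\{p^{(H)}_n(l,n-l)^2-q^{(H)}_n(l,n-l)^2\Big\}=-\int_{-1/\sqrt2}^{1/\sqrt2}e^{i\xi x}\,\frac{x}{\pi(1-x^2)\sqrt{1-2x^2}}\,dx.$$
   Context: For $\min\{l,m\}\ge1$, $n=l+m$: $p^{(H)}_n(l,m)=(1/\sqrt2)^{n-1}\sum_{\gamma=1}^{(l-1)\wedge m}(-1)^{m-\gamma}\binom{l-1}{\gamma}\binom{m-1}{\gamma-1}$ and $q^{(H)}_n(l,m)=(1/\sqrt2)^{n-1}\sum_{\gamma=1}^{l\wedge(m-1)}(-1)^{m-\gamma-1}\binom{l-1}{\gamma-1}\binom{m-1}{\gamma}$ (empty sums are $0$); for $n\ge1$, $p^{(H)}_n(0,n)=0$, $q^{(H)}_n(0,n)=(-1/\sqrt2)^{n-1}$, $p^{(H)}_n(n,0)=(1/\sqrt2)^{n-1}$, $q^{(H)}_n(n,0)=0$. *)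

theory Defs
  imports "HOL-Analysis.Analysis"
begin

text \<open>pH l m and qH l m are p^(H)_n(l,m), q^(H)_n(l,m) with n = l + m.
  The value at l = m = 0 (n = 0) is not specified by the paper; we set it to 0.\<close>

definition pH :: "nat \<Rightarrow> nat \<Rightarrow> real" where
  "pH l m =
    (if l \<ge> 1 \<and> m \<ge> 1 then
       (1 / sqrt 2) ^ (l + m - 1) *
       (\<Sum>\<gamma> = 1..min (l - 1) m.
          (-1) ^ (m - \<gamma>) * real ((l - 1) choose \<gamma>) * real ((m - 1) choose (\<gamma> - 1)))
     else if l = 0 \<and> m \<ge> 1 then 0
     else if m = 0 \<and> l \<ge> 1 then (1 / sqrt 2) ^ (l - 1)
     else 0)"

definition qH :: "nat \<Rightarrow> nat \<Rightarrow> real" where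
  "qH l m =
    (if l \<ge> 1 \<and> m \<ge> 1 then
       (1 / sqrt 2) ^ (l + m - 1) *
       (\<Sum>\<gamma> = 1..min l (m - 1).
          (-1) ^ (m - \<gamma> - 1) * real ((l - 1) choose (\<gamma> - 1)) * real ((m - 1) choose \<gamma>))
     else if l = 0 \<and> m \<ge> 1 then (- 1 / sqrt 2) ^ (m - 1)
     else if m = 0 \<and> l \<ge> 1 then 0
     else 0)"

end

theory Submission
  imports Defs
begin

lemma qH_sq: "(qH l m)^2 = (pH m l)^2"
proof -
  consider "l \<ge> 1 \<and> m \<ge> 1" | "l = 0 \<and> m \<ge> 1" | "m = 0 \<and> l \<ge> 1" | "l = 0 \<and> m = 0" by linarith
  then show ?thesis
  proof cases
    case 1
    have "qH l m = (-1)^(l+m-1) * pH m l"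
    proof -
      have e: "min (m - 1) l = min l (m - 1)" by simp
      have "qH l m = (1 / sqrt 2) ^ (l + m - 1) *
         (\<Sum>\<gamma> = 1..min l (m - 1). (-1)^(l+m-1) * ((-1) ^ (l - \<gamma>) * real ((m - 1) choose \<gamma>) * real ((l - 1) choose (\<gamma> - 1))))"
        unfolding qH_def using 1
      proof (simp, intro disjI2 sum.cong refl)
        fix g assume g: "g \<in> {Suc 0..min l (m - Suc 0)}"
        have "m - g - 1 + 2 * l = (l + m - 1) + (l - g)" using g 1 by auto
        hence "(-1::real)^(m - g - 1) = (-1)^(l+m-1) * (-1)^(l-g)"
          by (metis power_add power_minus1_even mult_1_right)
        thus "(- 1) ^ (m - Suc g) * real (l - Suc 0 choose (g - Suc 0)) * real (m - Suc 0 choose g) =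
         (- 1) ^ (l + m - Suc 0) * ((- 1) ^ (l - g) * real (m - Suc 0 choose g) * real (l - Suc 0 choose (g - Suc 0)))"
          by simp
      qed
      also have "\<dots> = (-1)^(l+m-1) * pH m l"
        unfolding pH_def using 1 by (simp add: sum_distrib_left mult_ac min.commute add.commute)
      finally show ?thesis .
    qed
    thus ?thesis by (simp add: power_mult_distrib power_even_eq[symmetric] mult.commute)
  next
    case 2
    have sq: "((- x)^n)^2 = ((x::real)^n)^2" for x n
      by (metis power_mult_distrib minus_mult_minus power2_eq_square)
    from 2 show ?thesis unfolding qH_def pH_def using sq by simp
  next
    case 3
    then show ?thesis unfolding qH_def pH_def by simp
  next
    case 4
    then show ?thesis unfolding qH_def pH_def by simp
  qed
qed

definition FF :: "nat \<Rightarrow> nat \<Rightarrow> nat \<Rightarrow> int" where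
  "FF N a b = (\<Sum>j<N. (-1)^j * int(a choose (j+1)) * int(b choose j))"

lemma pH_FF:
  assumes "N \<ge> a"
  shows "pH (Suc a) (Suc b) = (1/sqrt 2)^(a+b+1) * (-1)^b * real_of_int (FF N a b)"
proof -
  let ?K = "min a (Suc b)"
  have "pH (Suc a) (Suc b) = (1/sqrt 2)^(a+b+1) *
      (\<Sum>j<?K. (-1) ^ (Suc b - Suc j) * real (a choose Suc j) * real (b choose j))"
    unfolding pH_def by (simp add: sum.atLeast1_atMost_eq)
  also have "(\<Sum>j<?K. (-1) ^ (Suc b - Suc j) * real (a choose Suc j) * real (b choose j))
      = (\<Sum>j<N. (-1)^b * ((-1)^j * real (a choose Suc j) * real (b choose j)))"
  proof (rule sum.mono_neutral_cong_left)
    show "finite {..<N}" by simp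
    show "{..<?K} \<subseteq> {..<N}" using assms by auto
    show "\<forall>i\<in>{..<N} - {..<?K}. (-1)^b * ((-1)^i * real (a choose Suc i) * real (b choose i)) = 0"
    proof
      fix i assume "i \<in> {..<N} - {..<?K}"
      hence "i \<ge> a \<or> i > b" by auto
      thus "(-1)^b * ((-1)^i * real (a choose Suc i) * real (b choose i)) = 0"
        by auto
    qed
    fix j assume "j \<in> {..<?K}"
    hence j: "j \<le> b" by auto
    have "b = (b - j) + j" using j by simp
    hence "(-1::real)^b = (-1)^(b-j) * (-1)^j" by (metis power_add)
    hence "(-1::real)^(b-j) = (-1)^b * (-1)^j"
      by (metis (no_types, lifting) mult.assoc mult.right_neutral power_minus1_even power_add mult_2)
    thus "(-1) ^ (Suc b - Suc j) * real (a choose Suc j) * real (b choose j)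
       = (-1)^b * ((-1)^j * real (a choose Suc j) * real (b choose j))" by simp
  qed
  finally show ?thesis unfolding FF_def by (simp add: sum_distrib_left sum_divide_distrib mult_ac)
qed

lemma telescope_alt:
  fixes G :: "nat \<Rightarrow> int"
  shows "(\<Sum>j<N. (-1)^j * (G j + G (Suc j))) = G 0 + (-1)^(N+1) * G N"
  by (induction N) (auto simp: algebra_simps)

lemma FF_rec:
  assumes "N > a"
  shows "FF N (Suc a) (Suc b) - FF N (Suc a) b - FF N a (Suc b) + 2 * FF N a b = 0"
proof -
  define G where "G j = (if j = 0 then 0 else int (a choose j) * int (b choose (j - 1)))" for j
  have "FF N (Suc a) (Suc b) - FF N (Suc a) b - FF N a (Suc b) + 2 * FF N a b
      = (\<Sum>j<N. (-1)^j * (G j + G (Suc j)))"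
    unfolding FF_def sum_subtractf[symmetric] sum_distrib_left sum.distrib[symmetric]
  proof (rule sum.cong[OF refl])
    fix j
    show "(-1) ^ j * int (Suc a choose (j + 1)) * int (Suc b choose j) -
         (-1) ^ j * int (Suc a choose (j + 1)) * int (b choose j) -
         (-1) ^ j * int (a choose (j + 1)) * int (Suc b choose j) +
         2 * ((-1) ^ j * int (a choose (j + 1)) * int (b choose j)) =
         (-1) ^ j * (G j + G (Suc j))"
    proof (cases j)
      case 0 thus ?thesis by (simp add: G_def)
    next
      case (Suc i) thus ?thesis by (simp add: G_def algebra_simps)
    qed
  qed
  also have "\<dots> = 0" unfolding telescope_alt using assms by (simp add: G_def)
  finally show ?thesis .
qed

lemma pH_0 [simp]: "pH 0 m = 0" unfolding pH_def by simp
lemma pH_1_Suc [simp]: "pH (Suc 0) (Suc m) = 0" unfolding pH_def by simp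
lemma pH_Suc_0 [simp]: "pH (Suc a) 0 = (1/sqrt 2)^a" unfolding pH_def by simp

lemma FF_0: "FF (Suc a) a 0 = int a"
proof -
  have "FF (Suc a) a 0 = (\<Sum>j<Suc a. if j = 0 then int a else 0)"
    unfolding FF_def by (intro sum.cong) auto
  thus ?thesis by simp
qed

lemma sq2r: "sqrt 2 * (1/sqrt 2)^(Suc k) = (1/sqrt 2)^k"
  by simp

lemma r2: "(1/sqrt 2)^(Suc (Suc k)) = (1/sqrt 2)^k / 2"
  by (simp add: power2_eq_square[symmetric] )

lemma s2x: "sqrt 2 * (sqrt 2 * x) = 2 * (x::real)"
  by (simp add: mult.assoc[symmetric])

lemma pH_rec:
  assumes "\<not> (l = 0 \<and> m = 0)"
  shows "sqrt 2 * pH (Suc l) (Suc m) = pH l (Suc m) + sqrt 2 * pH l m - pH (Suc l) m"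
proof (cases l)
  case 0
  then show ?thesis using assms by (cases m) simp_all
next
  case (Suc a)
  note l = Suc
  show ?thesis
  proof (cases m)
    case 0
    have e1: "pH (Suc (Suc a)) (Suc 0) = (1/sqrt 2)^(a+2) * (a+1)"
      by (subst pH_FF[where N="Suc (Suc a)"]) (simp_all add: FF_0[of "Suc a", simplified])
    have e2: "pH (Suc a) (Suc 0) = (1/sqrt 2)^(a+1) * a"
      by (subst pH_FF[where N="Suc a"]) (simp_all add: FF_0)
    show ?thesis unfolding l 0 e1 e2 pH_Suc_0
      by (simp add: field_simps s2x)
  next
    case (Suc b)
    note m = Suc
    let ?N = "Suc (Suc a)"
    let ?r = "1/sqrt 2"
    have h1: "pH (Suc (Suc a)) (Suc (Suc b)) = ?r^(Suc a + Suc b + 1) * (-1)^(Suc b) * FF ?N (Suc a) (Suc b)"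
      by (rule pH_FF) simp
    have h2: "pH (Suc a) (Suc (Suc b)) = ?r^(a + Suc b + 1) * (-1)^(Suc b) * FF ?N a (Suc b)"
      by (rule pH_FF) simp
    have h3: "pH (Suc a) (Suc b) = ?r^(a+b+1) * (-1)^b * FF ?N a b"
      by (rule pH_FF) simp
    have h4: "pH (Suc (Suc a)) (Suc b) = ?r^(Suc a + b + 1) * (-1)^b * FF ?N (Suc a) b"
      by (rule pH_FF) simp
    have rec: "real_of_int (FF ?N (Suc a) (Suc b)) = FF ?N (Suc a) b + FF ?N a (Suc b) - 2 * FF ?N a b"
      using FF_rec[of a ?N b] by simp
    define t where "t = ?r^(a+b+2)"
    have p3: "?r^(Suc a + Suc b + 1) = t / sqrt 2" unfolding t_def by (simp add: field_simps)
    have p2: "?r^(a + Suc b + 1) = t" "?r^(Suc a + b + 1) = t" unfolding t_def by simp_all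
    have p1: "?r^(a+b+1) = t * sqrt 2" unfolding t_def by (simp add: field_simps)
    show ?thesis unfolding l m h1 h2 h3 h4 rec p3 p1 p2
      by (simp add: field_simps s2x)
  qed
qed

definition sH :: "nat \<Rightarrow> nat \<Rightarrow> real" where
  "sH l m = sqrt 2 * pH (Suc l) m - pH l m"

lemma pH_Suc_rec: "pH (Suc l) m = (pH l m + sH l m) / sqrt 2"
  unfolding sH_def by simp

lemma sH_rec: assumes "\<not> (l = 0 \<and> m = 0)" shows "sH l (Suc m) = (pH l m - sH l m) / sqrt 2"
proof -
  have "sH l (Suc m) = sqrt 2 * pH l m - pH (Suc l) m"
    unfolding sH_def using pH_rec[OF assms] by simp
  also have "\<dots> = (pH l m - sH l m) / sqrt 2"
    unfolding sH_def by (simp add: field_simps s2x)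
  finally show ?thesis .
qed

lemma sH_Suc_0: "sH (Suc a) 0 = 0" unfolding sH_def by (simp add: field_simps)
lemma sH_0_1: "sH 0 (Suc 0) = 0" unfolding sH_def by simp

definition Ph :: "nat \<Rightarrow> real \<Rightarrow> complex" where
  "Ph n k = (\<Sum>l\<le>n. complex_of_real (pH l (n-l)) * cis (k * (real n - 2*real l)))"
definition Sh :: "nat \<Rightarrow> real \<Rightarrow> complex" where
  "Sh n k = (\<Sum>l\<le>n. complex_of_real (sH l (n-l)) * cis (k * (real n - 2*real l)))"

lemma Ph_1: "Ph 1 k = cis (- k)" unfolding Ph_def by simp
lemma Sh_1: "Sh 1 k = 0" unfolding Sh_def by (simp add: sH_Suc_0 sH_0_1)

lemma Ph_Suc: assumes "n \<ge> 1"
  shows "Ph (Suc n) k = cis (- k) * (Ph n k + Sh n k) / sqrt 2"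
proof -
  have "Ph (Suc n) k = (\<Sum>l\<le>n. complex_of_real (pH (Suc l) (n-l)) * cis (k * (real (Suc n) - 2*real (Suc l))))"
    unfolding Ph_def sum.atMost_Suc_shift by simp
  also have "\<dots> = (\<Sum>l\<le>n. cis (- k) * (complex_of_real (pH l (n-l)) * cis (k * (real n - 2*real l))
        + complex_of_real (sH l (n-l)) * cis (k * (real n - 2*real l))) / sqrt 2)"
  proof (rule sum.cong[OF refl])
    fix l
    have "cis (k * (real (Suc n) - 2*real (Suc l))) = cis (-k) * cis (k * (real n - 2*real l))"
      by (simp add: cis_mult algebra_simps)
    thus "complex_of_real (pH (Suc l) (n-l)) * cis (k * (real (Suc n) - 2*real (Suc l))) =
      cis (- k) * (complex_of_real (pH l (n-l)) * cis (k * (real n - 2*real l))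
        + complex_of_real (sH l (n-l)) * cis (k * (real n - 2*real l))) / sqrt 2"
      unfolding pH_Suc_rec by (simp add: field_simps)
  qed
  also have "\<dots> = cis (- k) * (Ph n k + Sh n k) / sqrt 2"
    unfolding Ph_def Sh_def by (simp only: sum.distrib[symmetric] sum_distrib_left sum_divide_distrib)
  finally show ?thesis .
qed

lemma Sh_Suc: assumes "n \<ge> 1"
  shows "Sh (Suc n) k = cis k * (Ph n k - Sh n k) / sqrt 2"
proof -
  have "Sh (Suc n) k = (\<Sum>l\<le>n. complex_of_real (sH l (Suc n - l)) * cis (k * (real (Suc n) - 2*real l)))"
    unfolding Sh_def sum.atMost_Suc by (simp add: sH_Suc_0)
  also have "\<dots> = (\<Sum>l\<le>n. cis k * (complex_of_real (pH l (n-l)) * cis (k * (real n - 2*real l))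
        - complex_of_real (sH l (n-l)) * cis (k * (real n - 2*real l))) / sqrt 2)"
  proof (rule sum.cong[OF refl])
    fix l assume l: "l \<in> {..n}"
    have "cis (k * (real (Suc n) - 2*real l)) = cis k * cis (k * (real n - 2*real l))"
      by (simp add: cis_mult algebra_simps)
    moreover have "Suc n - l = Suc (n - l)" using l by auto
    moreover have "sH l (Suc (n - l)) = (pH l (n-l) - sH l (n-l)) / sqrt 2"
      using assms l by (intro sH_rec) auto
    ultimately have e: "complex_of_real (sH l (Suc n - l)) = (complex_of_real (pH l (n-l)) - complex_of_real (sH l (n-l))) / sqrt 2"
      by simp
    show "complex_of_real (sH l (Suc n - l)) * cis (k * (real (Suc n) - 2*real l)) =
      cis k * (complex_of_real (pH l (n-l)) * cis (k * (real n - 2*real l))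
        - complex_of_real (sH l (n-l)) * cis (k * (real n - 2*real l))) / sqrt 2"
      unfolding e \<open>cis (k * (real (Suc n) - 2*real l)) = cis k * cis (k * (real n - 2*real l))\<close>
      by (simp add: algebra_simps)
  qed
  also have "\<dots> = cis k * (Ph n k - Sh n k) / sqrt 2"
    unfolding Ph_def Sh_def by (simp only: sum_subtractf[symmetric] sum_distrib_left sum_divide_distrib right_diff_distrib)
  finally show ?thesis .
qed

lemma eig_abstract:
  fixes E Ei C Cb r d :: complex
  assumes EE: "E * Ei = 1" and CC: "C * Cb = 1" and rr: "2 * r * r = 1"
    and rel: "r * (E - Ei) = -(C - Cb)" and d: "d \<noteq> 0"
  shows "E * ((E + r*C)/d + r*C/d) * r = Cb * ((E + r*C)/d)"
    and "Ei * ((E + r*C)/d - r*C/d) * r = Cb * (r*C/d)"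
    and "E * ((r*Cb - E)/d + r*Cb/d) * r = - C * ((r*Cb - E)/d)"
    and "Ei * ((r*Cb - E)/d - r*Cb/d) * r = - C * (r*Cb/d)"
    and "Cb * ((E + r*C)/d) + (- C) * ((r*Cb - E)/d) = E * (C + Cb) / d"
    and "Cb * (r*C/d) + (- C) * (r*Cb/d) = 0"
proof -
  have A: "r*E*E - r = E*(Cb - C)"
  proof -
    have "r*E*E - r = E * (r * (E - Ei))" using EE by (simp add: algebra_simps)
    also have "\<dots> = E * (-(C - Cb))" by (simp only: rel)
    finally show ?thesis by simp
  qed
  show "E * ((E + r*C)/d + r*C/d) * r = Cb * ((E + r*C)/d)"
    using d A CC rr by (simp add: field_simps; simp add: algebra_simps)
  show "Ei * ((E + r*C)/d - r*C/d) * r = Cb * (r*C/d)"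
    using d EE CC by (simp add: field_simps; simp add: algebra_simps)
  show "E * ((r*Cb - E)/d + r*Cb/d) * r = - C * ((r*Cb - E)/d)"
    using d A CC rr by (simp add: field_simps; simp add: algebra_simps)
  show "Ei * ((r*Cb - E)/d - r*Cb/d) * r = - C * (r*Cb/d)"
    using d EE CC by (simp add: field_simps; simp add: algebra_simps)
  show "Cb * ((E + r*C)/d) + (- C) * ((r*Cb - E)/d) = E * (C + Cb) / d"
    using d CC by (simp add: field_simps; simp add: algebra_simps)
  show "Cb * (r*C/d) + (- C) * (r*Cb/d) = 0"
    using d by (simp add: field_simps)
qed

definition cc :: "real \<Rightarrow> real" where "cc k = sqrt (1 - (sin k)^2 / 2)"
definition ss :: "real \<Rightarrow> real" where "ss k = sin k / sqrt 2"
definition om :: "real \<Rightarrow> real" where "om k = arcsin (ss k)"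
definition CC :: "real \<Rightarrow> complex" where "CC k = Complex (cc k) (ss k)"
definition rr :: complex where "rr = complex_of_real (1 / sqrt 2)"
definition dd :: "real \<Rightarrow> complex" where "dd k = complex_of_real (2 * cc k)"
definition a1 :: "real \<Rightarrow> complex" where "a1 k = (cis (-k) + rr * CC k) / dd k"
definition a2 :: "real \<Rightarrow> complex" where "a2 k = (rr * cnj (CC k) - cis (-k)) / dd k"
definition b1 :: "real \<Rightarrow> complex" where "b1 k = rr * CC k / dd k"
definition b2 :: "real \<Rightarrow> complex" where "b2 k = rr * cnj (CC k) / dd k"

lemma sin_sq_le: "(sin (k::real))^2 \<le> 1"
  using abs_sin_le_one[of k] abs_square_le_1 by blast

lemma cc_pos: "cc k > 0"
  unfolding cc_def using sin_sq_le[of k] by simp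

lemma cc_sq: "(cc k)^2 = 1 - (sin k)^2 / 2"
  unfolding cc_def using sin_sq_le[of k] by simp

lemma ss_sq: "(ss k)^2 = (sin k)^2 / 2"
  unfolding ss_def by (simp add: power_divide)

lemma ss_bound: "\<bar>ss k\<bar> \<le> 1"
proof -
  have "(ss k)^2 \<le> 1" using ss_sq[of k] sin_sq_le[of k] by simp
  thus ?thesis by (metis abs_square_le_1)
qed

lemma CC_cnj: "CC k * cnj (CC k) = 1"
  unfolding CC_def using cc_sq[of k] ss_sq[of k]
  by (simp add: complex_eq_iff power2_eq_square[symmetric])

lemma sin_om: "sin (om k) = ss k"
  unfolding om_def using ss_bound[of k] by (simp add: abs_le_iff)

lemma cos_om: "cos (om k) = cc k"
proof -
  have "cos (om k) = sqrt (1 - (ss k)^2)" unfolding om_def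
    using ss_bound[of k] by (simp add: cos_arcsin abs_le_iff)
  also have "\<dots> = cc k" unfolding cc_def ss_sq ..
  finally show ?thesis .
qed

lemma cis_om: "cis (om k) = CC k"
  unfolding CC_def by (simp add: complex_eq_iff sin_om cos_om)

lemma cis_mom: "cis (- om k) = cnj (CC k)"
  by (metis cis_cnj cis_om)

lemma rel_k: "rr * (cis (-k) - cis k) = -(CC k - cnj (CC k))"
  unfolding rr_def CC_def ss_def by (simp add: complex_eq_iff)

lemma dd_eq: "dd k = CC k + cnj (CC k)" "dd k \<noteq> 0"
  unfolding dd_def CC_def using cc_pos[of k] by (auto simp: complex_eq_iff)

lemma rr2: "2 * rr * rr = 1"
proof -
  have "rr * rr = complex_of_real (1/2)" unfolding rr_def of_real_mult[symmetric] by simp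
  thus ?thesis by (simp add: mult_ac)
qed

lemma div_sqrt2: "x / complex_of_real (sqrt 2) = x * rr"
  unfolding rr_def by (simp add: divide_inverse)

lemma closed_form:
  assumes "n \<ge> 1"
  shows "Ph n k = cnj (CC k) ^ n * a1 k + (- CC k) ^ n * a2 k \<and>
         Sh n k = cnj (CC k) ^ n * b1 k + (- CC k) ^ n * b2 k"
  using assms
proof (induction n rule: nat_induct_at_least)
  case base
  have EE: "cis (-k) * cis k = 1" by (simp add: cis_mult)
  note e = eig_abstract[OF EE CC_cnj rr2 rel_k dd_eq(2)]
  show ?case unfolding Ph_1 Sh_1 a1_def a2_def b1_def b2_def
    using e(5) e(6) dd_eq(2)[of k] by (simp add: dd_eq(1)[symmetric])
next
  case (Suc n)
  have EE: "cis (-k) * cis k = 1" by (simp add: cis_mult)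
  note e = eig_abstract[OF EE CC_cnj rr2 rel_k dd_eq(2)]
  have P: "Ph (Suc n) k = cnj (CC k) ^ n * (cis (-k) * (a1 k + b1 k) * rr) + (- CC k) ^ n * (cis (-k) * (a2 k + b2 k) * rr)"
    unfolding Ph_Suc[OF Suc(1)] div_sqrt2 using Suc(2) by (simp add: algebra_simps)
  have S: "Sh (Suc n) k = cnj (CC k) ^ n * (cis k * (a1 k - b1 k) * rr) + (- CC k) ^ n * (cis k * (a2 k - b2 k) * rr)"
    unfolding Sh_Suc[OF Suc(1)] div_sqrt2 using Suc(2) by (simp add: algebra_simps)
  have q1: "cis (-k) * (a1 k + b1 k) * rr = cnj (CC k) * a1 k"
    using e(1) unfolding a1_def b1_def .
  have q2: "cis k * (a1 k - b1 k) * rr = cnj (CC k) * b1 k"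
    using e(2) unfolding a1_def b1_def .
  have q3: "cis (-k) * (a2 k + b2 k) * rr = - CC k * a2 k"
    using e(3) unfolding a2_def b2_def .
  have q4: "cis k * (a2 k - b2 k) * rr = - CC k * b2 k"
    using e(4) unfolding a2_def b2_def .
  show ?case unfolding P S q1 q2 q3 q4 by (simp add: mult_ac)
qed

lemma cis_has_vd:
  assumes "(f has_real_derivative f') (at x within A)"
  shows "((\<lambda>x. cis (f x)) has_vector_derivative (complex_of_real f' * (\<i> * cis (f x)))) (at x within A)"
  unfolding has_vector_derivative_def
  using has_derivative_cis[OF assms[unfolded has_field_derivative_def]]
  by (rule has_derivative_eq_rhs) (auto simp: scaleR_conv_of_real mult_ac)

lemma int_cis:
  "((\<lambda>k. cis (k * (2*real j - 2*real l))) has_integral (if j = l then 2*pi else 0)) {-pi..pi}"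
proof (cases "j = l")
  case True
  then show ?thesis using has_integral_const_real[of "1::complex" "-pi" pi] by (simp add: scaleR_conv_of_real)
next
  case False
  define a where "a = 2*real j - 2*real l"
  have a0: "a \<noteq> 0" using False unfolding a_def by simp
  define F where "F k = cis (k * a) / (\<i> * complex_of_real a)" for k
  have der: "(F has_vector_derivative cis (k * a)) (at k within {-pi..pi})" for k
  proof -
    have "((\<lambda>k. k * a) has_real_derivative a) (at k within {-pi..pi})"
      by (auto intro!: derivative_eq_intros)
    from cis_has_vd[OF this] have "((\<lambda>k. cis (k * a)) has_vector_derivative (complex_of_real a * (\<i> * cis (k * a)))) (at k within {-pi..pi})" .
    hence "((\<lambda>k. cis (k * a) * (1 / (\<i> * complex_of_real a))) has_vector_derivative (complex_of_real a * (\<i> * cis (k * a))) * (1 / (\<i> * complex_of_real a))) (at k within {-pi..pi})"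
      by (rule has_vector_derivative_mult_left)
    thus ?thesis unfolding F_def using a0 by (simp add: field_simps)
  qed
  have "((\<lambda>k. cis (k * a)) has_integral (F pi - F (-pi))) {-pi..pi}"
    by (rule fundamental_theorem_of_calculus) (auto intro: der)
  moreover have "F pi = F (-pi)"
  proof -
    have i: "real j - real l \<in> \<int>" by (metis Ints_diff Ints_of_nat)
    have "cis (pi * a) = 1" unfolding a_def using cis_multiple_2pi[OF i] by (simp add: algebra_simps)
    moreover have "cis (- pi * a) = 1" unfolding a_def using cis_multiple_2pi[OF i]
      by (metis (no_types, opaque_lifting) cis_cnj complex_cnj_one mult_minus_left calculation a_def)
    ultimately show ?thesis unfolding F_def by simp
  qed
  ultimately show ?thesis using False unfolding a_def by simp
qed

definition Phi :: "nat \<Rightarrow> real \<Rightarrow> complex" where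
  "Phi n \<theta> = (\<Sum>l\<le>n. cis (\<theta> * (real n - 2*real l)) * complex_of_real ((pH l (n-l))^2))"

lemma cnj_Ph: "cnj (Ph n k) = (\<Sum>l\<le>n. complex_of_real (pH l (n-l)) * cis (- (k * (real n - 2*real l))))"
  unfolding Ph_def cnj_sum by (simp add: cis_cnj)

lemma parseval:
  "((\<lambda>k. Ph n k * cnj (Ph n (k - \<theta>))) has_integral (2*pi) * Phi n \<theta>) {-pi..pi}"
proof -
  let ?p = "\<lambda>l. pH l (n-l)"
  have eq: "Ph n k * cnj (Ph n (k - \<theta>)) = (\<Sum>l\<le>n. \<Sum>j\<le>n. complex_of_real (?p l * ?p j) * cis (\<theta> * (real n - 2*real j)) * cis (k * (2*real j - 2*real l)))" for k
    unfolding cnj_Ph unfolding Ph_def sum_product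
  proof (intro sum.cong refl)
    fix l j
    have "cis (k * (real n - 2 * real l)) * cis (- ((k - \<theta>) * (real n - 2 * real j))) = cis (\<theta> * (real n - 2*real j)) * cis (k * (2*real j - 2*real l))"
      by (simp add: cis_mult algebra_simps)
    thus "complex_of_real (?p l) * cis (k * (real n - 2 * real l)) * (complex_of_real (?p j) * cis (- ((k - \<theta>) * (real n - 2 * real j)))) =
          complex_of_real (?p l * ?p j) * cis (\<theta> * (real n - 2*real j)) * cis (k * (2*real j - 2*real l))"
      by (simp add: mult_ac)
  qed
  have "((\<lambda>k. \<Sum>l\<le>n. \<Sum>j\<le>n. complex_of_real (?p l * ?p j) * cis (\<theta> * (real n - 2*real j)) * cis (k * (2*real j - 2*real l)))
     has_integral (\<Sum>l\<le>n. \<Sum>j\<le>n. complex_of_real (?p l * ?p j) * cis (\<theta> * (real n - 2*real j)) * (if j = l then 2*pi else 0))) {-pi..pi}"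
    by (intro has_integral_sum finite_atMost has_integral_mult_right int_cis)
  moreover have "(\<Sum>l\<le>n. \<Sum>j\<le>n. complex_of_real (?p l * ?p j) * cis (\<theta> * (real n - 2*real j)) * (if j = l then 2*pi else 0)) = (2*pi) * Phi n \<theta>"
    unfolding Phi_def sum_distrib_left
    by (intro sum.cong refl) (simp add: if_distrib sum.delta power2_eq_square mult_ac cong: if_cong)
  ultimately show ?thesis unfolding eq by simp
qed

definition w :: "real \<Rightarrow> real" where "w k = cos k / (sqrt 2 * cc k)"

lemma ss_lt: "-1 < ss k" "ss k < 1"
proof -
  have "(ss k)^2 < 1" using ss_sq[of k] sin_sq_le[of k] by simp
  hence "\<bar>ss k\<bar> < 1" by (metis abs_square_less_1)
  thus "-1 < ss k" "ss k < 1" by auto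
qed

lemma sqrt_ss: "sqrt (1 - (ss k)^2) = cc k"
  unfolding cc_def ss_sq ..

lemma om_deriv: "(om has_real_derivative w k) (at k)"
proof -
  have d1: "(arcsin has_real_derivative inverse (sqrt (1 - (ss k)^2))) (at (ss k))"
    by (rule DERIV_arcsin) (use ss_lt[of k] in auto)
  have d2: "(ss has_real_derivative cos k / sqrt 2) (at k)"
    unfolding ss_def[abs_def] by (rule DERIV_cdivide[OF DERIV_sin])
  have "((\<lambda>x. arcsin (ss x)) has_real_derivative inverse (sqrt (1 - (ss k)^2)) * (cos k / sqrt 2)) (at k)"
    by (rule DERIV_chain2[OF d1 d2])
  moreover have "inverse (sqrt (1 - (ss k)^2)) * (cos k / sqrt 2) = w k"
    unfolding sqrt_ss w_def by (simp add: divide_inverse mult_ac real_div_sqrt)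
  ultimately show ?thesis unfolding om_def[abs_def] by simp
qed

lemma om_cont: "continuous_on UNIV om"
  by (rule continuous_at_imp_continuous_on) (auto intro: DERIV_isCont om_deriv)

lemma cc_cont: "continuous_on UNIV cc"
  unfolding cc_def[abs_def] by (intro continuous_intros) auto

lemma cc_ne: "cc k \<noteq> 0" using cc_pos[of k] by simp

lemma w_cont: "continuous_on UNIV w"
  unfolding w_def[abs_def] by (intro continuous_intros cc_cont) (auto simp: cc_ne)

lemma CC_eq: "CC k = complex_of_real (cc k) + \<i> * complex_of_real (ss k)"
  by (simp add: CC_def complex_eq_iff)
lemma cnjCC_eq: "cnj (CC k) = complex_of_real (cc k) - \<i> * complex_of_real (ss k)"
  by (simp add: CC_def complex_eq_iff)

lemma ss_cont: "continuous_on UNIV ss"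
  unfolding ss_def[abs_def] by (intro continuous_intros) auto

lemma a1_cont: "continuous_on UNIV a1"
  unfolding a1_def[abs_def] CC_eq dd_def
  by (intro continuous_intros cc_cont ss_cont) (auto simp: cc_ne)

lemma a2_cont: "continuous_on UNIV a2"
  unfolding a2_def[abs_def] cnjCC_eq dd_def
  by (intro continuous_intros cc_cont ss_cont) (auto simp: cc_ne)

lemma cont_bound:
  fixes f :: "real \<Rightarrow> 'a::real_normed_vector"
  assumes "continuous_on S f" "compact S"
  shows "\<exists>B>0. \<forall>x\<in>S. norm (f x) \<le> B"
proof -
  obtain B where "B > 0" "\<forall>y\<in>f ` S. norm y \<le> B"
    using compact_imp_bounded[OF compact_continuous_image[OF assms]] bounded_pos by metis
  thus ?thesis by auto
qed

lemma unif_cont_shift: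
  fixes f :: "real \<Rightarrow> 'a::real_normed_vector"
  assumes "continuous_on UNIV f" "e > 0"
  shows "\<exists>d>0. \<forall>x\<in>{-pi-1..pi+1}. \<forall>y\<in>{-pi-1..pi+1}. \<bar>y - x\<bar> < d \<longrightarrow> norm (f y - f x) < e"
proof -
  have "uniformly_continuous_on {-pi-1..pi+1} f"
    by (rule compact_uniformly_continuous) (auto intro: continuous_on_subset[OF assms(1)])
  thus ?thesis unfolding uniformly_continuous_on_def using assms(2) by (auto simp: dist_norm)
qed

lemma om_mvt: "\<exists>z. \<bar>z - k\<bar> \<le> \<bar>h\<bar> \<and> om k - om (k - h) = h * w z"
proof (cases h "0::real" rule: linorder_cases)
  case less
  obtain z where "k < z" "z < k - h" "om (k - h) - om k = (k - h - k) * w z"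
    using MVT2[of k "k - h" om w] less om_deriv by auto
  thus ?thesis by (intro exI[of _ z]) (auto simp: algebra_simps)
next
  case equal thus ?thesis by auto
next
  case greater
  obtain z where "k - h < z" "z < k" "om k - om (k - h) = (k - (k - h)) * w z"
    using MVT2[of "k - h" k om w] greater om_deriv by auto
  thus ?thesis by (intro exI[of _ z]) (auto simp: algebra_simps)
qed

lemma norm_cis_minus1: "norm (cis t - 1) \<le> \<bar>t\<bar>"
proof -
  have c: "cos t = 1 - 2 * (sin (t/2))^2" using cos_double_sin[of "t/2"] by simp
  have "(norm (cis t - 1))^2 = (cos t - 1)^2 + (sin t)^2" by (simp add: cmod_power2)
  also have "\<dots> = 2 - 2 * cos t" using sin_cos_squared_add[of t] by (simp add: power2_diff)
  also have "\<dots> = 4 * (sin (t/2))^2" unfolding c by simp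
  also have "\<dots> \<le> 4 * (t/2)^2"
    using abs_le_square_iff abs_sin_x_le_abs_x by (metis mult_left_mono zero_le_numeral)
  also have "\<dots> = (\<bar>t\<bar>)^2" by (simp add: power2_eq_square)
  finally show ?thesis by (rule power2_le_imp_le) simp
qed

lemma norm_cis_diff: "norm (cis x - cis y) \<le> \<bar>x - y\<bar>"
proof -
  have "norm (cis x - cis y) = norm (cis y * (cis (x - y) - 1))"
    by (simp add: algebra_simps cis_mult)
  also have "\<dots> = norm (cis (x - y) - 1)" by (simp add: norm_mult)
  also have "\<dots> \<le> \<bar>x - y\<bar>" by (rule norm_cis_minus1)
  finally show ?thesis .
qed

lemma eventually_N:
  fixes c :: real
  shows "\<exists>N::nat. N \<ge> 1 \<and> real N > c"
proof -
  obtain N :: nat where "c < real N" using reals_Archimedean2 by blast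
  thus ?thesis by (intro exI[of _ "Suc N"]) auto
qed

lemma U1:
  assumes "e > 0"
  shows "\<exists>N. \<forall>n\<ge>N. \<forall>k\<in>{-pi..pi}. \<bar>real n * (om k - om (k - \<xi> / real n)) - \<xi> * w k\<bar> \<le> e"
proof (cases "\<xi> = 0")
  case True thus ?thesis using assms by auto
next
  case False
  hence xp: "\<bar>\<xi>\<bar> > 0" by simp
  obtain d where d: "d > 0" and dd: "\<forall>x\<in>{-pi-1..pi+1}. \<forall>y\<in>{-pi-1..pi+1}. \<bar>y - x\<bar> < d \<longrightarrow> norm (w y - w x) < e / \<bar>\<xi>\<bar>"
    using unif_cont_shift[OF w_cont, of "e / \<bar>\<xi>\<bar>"] assms xp by auto
  obtain N :: nat where N: "N \<ge> 1" "real N > \<bar>\<xi>\<bar> / d + \<bar>\<xi>\<bar>"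
    using eventually_N by blast
  show ?thesis
  proof (intro exI[of _ N] allI impI ballI)
    fix n k assume n: "n \<ge> N" and k: "k \<in> {-pi..pi}"
    have npos: "real n > 0" using n N by simp
    have nb: "real n > \<bar>\<xi>\<bar> / d + \<bar>\<xi>\<bar>" using n N(2) by (meson le_less_trans not_le of_nat_le_iff)
    define h where "h = \<xi> / real n"
    have h1: "\<bar>h\<bar> \<le> 1"
    proof -
      have "\<bar>\<xi>\<bar> \<le> real n" using nb d xp by (smt (verit) divide_nonneg_pos)
      thus ?thesis unfolding h_def using npos by (simp add: abs_div)
    qed
    have hd: "\<bar>h\<bar> < d"
    proof -
      have "\<bar>\<xi>\<bar> / d < real n" using nb xp by (smt (verit))
      hence "\<bar>\<xi>\<bar> < d * real n" using d by (simp add: field_simps)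
      thus ?thesis unfolding h_def using npos by (simp add: abs_div field_simps)
    qed
    obtain z where z: "\<bar>z - k\<bar> \<le> \<bar>h\<bar>" "om k - om (k - h) = h * w z" using om_mvt by blast
    have zin: "z \<in> {-pi-1..pi+1}" using z(1) h1 k by auto
    have kin: "k \<in> {-pi-1..pi+1}" using k by auto
    have "\<bar>w z - w k\<bar> < e / \<bar>\<xi>\<bar>" using dd zin kin z(1) hd by auto
    hence "\<bar>\<xi>\<bar> * \<bar>w z - w k\<bar> \<le> e" using xp by (simp add: field_simps)
    moreover have "real n * (om k - om (k - h)) - \<xi> * w k = \<xi> * (w z - w k)"
    proof -
      have nh: "real n * h = \<xi>" unfolding h_def using npos by simp
      show ?thesis unfolding z(2) mult.assoc[symmetric] nh by (simp add: algebra_simps)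
    qed
    ultimately show "\<bar>real n * (om k - om (k - \<xi> / real n)) - \<xi> * w k\<bar> \<le> e"
      unfolding h_def[symmetric] by (simp add: abs_mult)
  qed
qed

lemma U2:
  fixes f :: "real \<Rightarrow> 'a::real_normed_vector"
  assumes f: "continuous_on UNIV f" and "e > 0"
  shows "\<exists>N. \<forall>n\<ge>N. \<forall>k\<in>{-pi..pi}. norm (f (k - \<xi> / real n) - f k) \<le> e"
proof -
  obtain d where d: "d > 0" and dd: "\<forall>x\<in>{-pi-1..pi+1}. \<forall>y\<in>{-pi-1..pi+1}. \<bar>y - x\<bar> < d \<longrightarrow> norm (f y - f x) < e"
    using unif_cont_shift[OF f assms(2)] by auto
  obtain N :: nat where N: "N \<ge> 1" "real N > \<bar>\<xi>\<bar> / d + \<bar>\<xi>\<bar>"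
    using eventually_N by blast
  show ?thesis
  proof (intro exI[of _ N] allI impI ballI)
    fix n k assume n: "n \<ge> N" and k: "k \<in> {-pi..pi}"
    have npos: "real n > 0" using n N by simp
    have nb: "real n > \<bar>\<xi>\<bar> / d + \<bar>\<xi>\<bar>" using n N(2) by (meson le_less_trans not_le of_nat_le_iff)
    define h where "h = \<xi> / real n"
    have h1: "\<bar>h\<bar> \<le> 1"
    proof -
      have "\<bar>\<xi>\<bar> \<le> real n" using nb d by (smt (verit) divide_nonneg_pos abs_ge_zero)
      thus ?thesis unfolding h_def using npos by (simp add: abs_div)
    qed
    have hd: "\<bar>h\<bar> < d"
    proof -
      have "\<bar>\<xi>\<bar> / d < real n" using nb by (smt (verit) abs_ge_zero)
      hence "\<bar>\<xi>\<bar> < d * real n" using d by (simp add: field_simps)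
      thus ?thesis unfolding h_def using npos by (simp add: abs_div field_simps)
    qed
    have "k - h \<in> {-pi-1..pi+1}" "k \<in> {-pi-1..pi+1}" using k h1 by auto
    thus "norm (f (k - \<xi> / real n) - f k) \<le> e"
      using dd hd unfolding h_def[symmetric] by (smt (verit, best))
  qed
qed

definition Gt :: "real \<Rightarrow> (real \<Rightarrow> complex) \<Rightarrow> (real \<Rightarrow> complex) \<Rightarrow> nat \<Rightarrow> real \<Rightarrow> real \<Rightarrow> complex" where
  "Gt \<sigma> A B n \<theta> k = cis (\<sigma> * (real n * (om k - om (k - \<theta>)))) * A k * cnj (B (k - \<theta>))"
definition Lt :: "real \<Rightarrow> real \<Rightarrow> (real \<Rightarrow> complex) \<Rightarrow> (real \<Rightarrow> complex) \<Rightarrow> real \<Rightarrow> complex" where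
  "Lt \<sigma> \<xi> A B k = cis (\<sigma> * (\<xi> * w k)) * A k * cnj (B k)"

lemma UL:
  assumes A: "continuous_on UNIV A" and B: "continuous_on UNIV B" and s: "\<bar>\<sigma>\<bar> \<le> 1" and e: "e > 0"
  shows "\<exists>N. \<forall>n\<ge>N. \<forall>k\<in>{-pi..pi}. norm (Gt \<sigma> A B n (\<xi> / real n) k - Lt \<sigma> \<xi> A B k) \<le> e"
proof -
  obtain MA where MA: "MA > 0" "\<forall>x\<in>{-pi-1..pi+1}. norm (A x) \<le> MA"
    using cont_bound[OF continuous_on_subset[OF A] compact_Icc] by blast
  obtain MB where MB: "MB > 0" "\<forall>x\<in>{-pi-1..pi+1}. norm (B x) \<le> MB"
    using cont_bound[OF continuous_on_subset[OF B] compact_Icc] by blast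
  obtain N1 where N1: "\<forall>n\<ge>N1. \<forall>k\<in>{-pi..pi}. \<bar>real n * (om k - om (k - \<xi> / real n)) - \<xi> * w k\<bar> \<le> e / (2*MA*MB)"
    using U1[of "e / (2*MA*MB)" \<xi>] e MA MB by auto
  obtain N2 where N2: "\<forall>n\<ge>N2. \<forall>k\<in>{-pi..pi}. norm (B (k - \<xi> / real n) - B k) \<le> e / (2*MA)"
    using U2[OF B, of "e / (2*MA)" \<xi>] e MA by auto
  obtain N3 :: nat where N3: "N3 \<ge> 1" "real N3 > \<bar>\<xi>\<bar>" using eventually_N by blast
  show ?thesis
  proof (intro exI[of _ "max N1 (max N2 N3)"] allI impI ballI)
    fix n k assume n: "max N1 (max N2 N3) \<le> n" and k: "k \<in> {-pi..pi}"
    have npos: "real n > 0" using n N3 by simp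
    have "\<bar>\<xi>\<bar> < real n" using n N3 by (smt (verit) max.bounded_iff of_nat_le_iff)
    hence h1: "\<bar>\<xi> / real n\<bar> \<le> 1" using npos by (simp add: abs_div)
    have kin: "k \<in> {-pi-1..pi+1}" "k - \<xi> / real n \<in> {-pi-1..pi+1}" using k abs_le_iff[THEN iffD1, OF h1] by auto
    define D where "D = real n * (om k - om (k - \<xi> / real n))"
    have D: "\<bar>D - \<xi> * w k\<bar> \<le> e / (2*MA*MB)" using N1 n k unfolding D_def by auto
    have Bd: "norm (B (k - \<xi> / real n) - B k) \<le> e / (2*MA)" using N2 n k by auto
    have eq: "Gt \<sigma> A B n (\<xi> / real n) k - Lt \<sigma> \<xi> A B k =
        (cis (\<sigma> * D) - cis (\<sigma> * (\<xi> * w k))) * A k * cnj (B (k - \<xi> / real n))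
        + cis (\<sigma> * (\<xi> * w k)) * A k * (cnj (B (k - \<xi> / real n)) - cnj (B k))"
      unfolding Gt_def Lt_def D_def by (simp add: algebra_simps)
    have t1: "norm ((cis (\<sigma> * D) - cis (\<sigma> * (\<xi> * w k))) * A k * cnj (B (k - \<xi> / real n))) \<le> e / (2*MA*MB) * MA * MB"
    proof -
      have "norm (cis (\<sigma> * D) - cis (\<sigma> * (\<xi> * w k))) \<le> \<bar>\<sigma> * D - \<sigma> * (\<xi> * w k)\<bar>" by (rule norm_cis_diff)
      also have "\<dots> = \<bar>\<sigma>\<bar> * \<bar>D - \<xi> * w k\<bar>" by (simp add: abs_mult[symmetric] algebra_simps)
      also have "\<dots> \<le> 1 * (e / (2*MA*MB))" using s D by (intro mult_mono) auto
      finally have c1: "norm (cis (\<sigma> * D) - cis (\<sigma> * (\<xi> * w k))) \<le> e / (2*MA*MB)" by simp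
      have "norm ((cis (\<sigma> * D) - cis (\<sigma> * (\<xi> * w k))) * A k * cnj (B (k - \<xi> / real n)))
          = norm (cis (\<sigma> * D) - cis (\<sigma> * (\<xi> * w k))) * norm (A k) * norm (B (k - \<xi> / real n))"
        by (simp add: norm_mult)
      also have "\<dots> \<le> e / (2*MA*MB) * MA * MB"
        using c1 MA MB kin e by (intro mult_mono) auto
      finally show ?thesis .
    qed
    have t2: "norm (cis (\<sigma> * (\<xi> * w k)) * A k * (cnj (B (k - \<xi> / real n)) - cnj (B k))) \<le> MA * (e / (2*MA))"
    proof -
      have "norm (cis (\<sigma> * (\<xi> * w k)) * A k * (cnj (B (k - \<xi> / real n)) - cnj (B k)))
          = norm (A k) * norm (B (k - \<xi> / real n) - B k)"
        by (simp add: norm_mult complex_cnj_diff[symmetric] del: complex_cnj_diff)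
      also have "\<dots> \<le> MA * (e / (2*MA))" using MA Bd kin by (intro mult_mono) auto
      finally show ?thesis .
    qed
    have "norm (Gt \<sigma> A B n (\<xi> / real n) k - Lt \<sigma> \<xi> A B k) \<le> e / (2*MA*MB) * MA * MB + MA * (e / (2*MA))"
      unfolding eq by (rule order.trans[OF norm_triangle_ineq add_mono[OF t1 t2]])
    also have "\<dots> = e" using MA MB by (simp add: field_simps)
    finally show "norm (Gt \<sigma> A B n (\<xi> / real n) k - Lt \<sigma> \<xi> A B k) \<le> e" .
  qed
qed

lemma cis_om_vd: "((\<lambda>k. cis (M * om k)) has_vector_derivative (complex_of_real (M * w k) * (\<i> * cis (M * om k)))) (at k)"
proof -
  have "((\<lambda>k. M * om k) has_real_derivative M * w k) (at k)"
    using om_deriv by (auto intro!: derivative_eq_intros)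
  thus ?thesis by (rule cis_has_vd)
qed

lemma cis_om_cont: "continuous_on S (\<lambda>k. cis (M * om k))"
  using continuous_on_subset[OF om_cont] by (intro continuous_intros) auto

lemma RL_good:
  fixes D :: "real \<Rightarrow> complex"
  assumes ab: "a \<le> b" and D: "continuous_on {a..b} D" and wnz: "\<forall>k\<in>{a..b}. w k \<noteq> 0" and e: "e > 0"
  shows "\<exists>M0>0. \<forall>M. \<bar>M\<bar> \<ge> M0 \<longrightarrow> norm (integral {a..b} (\<lambda>k. cis (M * om k) * D k)) \<le> e"
proof -
  define E where "E k = D k / complex_of_real (w k)" for k
  have wc: "continuous_on {a..b} w" using continuous_on_subset[OF w_cont] by auto
  have Ec: "continuous_on {a..b} E" unfolding E_def using wnz
    by (intro continuous_intros D wc) auto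
  obtain Wb where Wb: "Wb > 0" "\<forall>x\<in>{a..b}. norm (w x) \<le> Wb"
    using cont_bound[OF wc compact_Icc] by blast
  define \<eta> where "\<eta> = e / (2 * (b - a + 1)) / Wb"
  have eta: "\<eta> > 0" unfolding \<eta>_def using e Wb ab by simp
  obtain p where p: "polynomial_function p" "\<forall>x\<in>{a..b}. norm (E x - p x) < \<eta>"
    using Stone_Weierstrass_polynomial_function[OF compact_Icc Ec eta] by blast
  obtain p' where p': "polynomial_function p'" "\<And>x. (p has_vector_derivative (p' x)) (at x)"
    using has_vector_derivative_polynomial_function[OF p(1)] by blast
  have pc: "continuous_on S p" for S using continuous_on_polymonial_function[OF p(1)] .
  have p'c: "continuous_on S p'" for S using continuous_on_polymonial_function[OF p'(1)] .
  obtain Pb where Pb: "Pb > 0" "\<forall>x\<in>{a..b}. norm (p x) \<le> Pb"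
    using cont_bound[OF pc compact_Icc] by blast
  obtain P'b where P'b: "P'b > 0" "\<forall>x\<in>{a..b}. norm (p' x) \<le> P'b"
    using cont_bound[OF p'c compact_Icc] by blast
  define M0 where "M0 = 2 * (2 * Pb + (b - a) * P'b) / e + 1"
  have K0: "2*Pb + (b-a)*P'b \<ge> 0" using Pb P'b ab by simp
  have "0 \<le> 2 * (2 * Pb + (b - a) * P'b) / e" using K0 e by simp
  hence M0: "M0 > 0" unfolding M0_def by linarith
  show ?thesis
  proof (intro exI[of _ M0] conjI allI impI M0)
    fix M :: real assume M: "\<bar>M\<bar> \<ge> M0"
    have Mpos: "\<bar>M\<bar> > 0" using M M0 by simp
    have M0': "M \<noteq> 0" using Mpos by simp
    have wcc: "continuous_on {a..b} (\<lambda>k. complex_of_real (w k))" by (intro continuous_intros wc)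
    let ?f1 = "\<lambda>k. cis (M * om k) * complex_of_real (w k) * p k"
    let ?f2 = "\<lambda>k. cis (M * om k) * complex_of_real (w k) * (E k - p k)"
    have c1: "continuous_on {a..b} ?f1" by (intro continuous_intros cis_om_cont wcc pc)
    have c2: "continuous_on {a..b} ?f2" by (intro continuous_intros cis_om_cont wcc pc Ec)
    have split: "integral {a..b} (\<lambda>k. cis (M * om k) * D k) = integral {a..b} ?f1 + integral {a..b} ?f2"
    proof -
      have "integral {a..b} (\<lambda>k. cis (M * om k) * D k) = integral {a..b} (\<lambda>k. ?f1 k + ?f2 k)"
      proof (rule integral_cong)
        fix k assume "k \<in> {a..b}"
        hence "w k \<noteq> 0" using wnz by auto
        thus "cis (M * om k) * D k = ?f1 k + ?f2 k" unfolding E_def by (simp add: field_simps)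
      qed
      also have "\<dots> = integral {a..b} ?f1 + integral {a..b} ?f2"
        by (rule integral_add) (auto intro: integrable_continuous_interval c1 c2)
      finally show ?thesis .
    qed
    have b2: "norm (integral {a..b} ?f2) \<le> Wb * \<eta> * (b - a)"
    proof (rule integral_bound[OF ab c2])
      fix t assume t: "t \<in> {a..b}"
      have "norm (?f2 t) = norm (w t) * norm (E t - p t)" by (simp add: norm_mult)
      also have "\<dots> \<le> Wb * \<eta>" using Wb p(2) t by (intro mult_mono) (auto intro: less_imp_le)
      finally show "norm (?f2 t) \<le> Wb * \<eta>" .
    qed
    have b2': "Wb * \<eta> * (b - a) \<le> e / 2"
    proof -
      have L: "b - a + 1 > 0" using ab by simp
      have "Wb * \<eta> = e / (2 * (b - a + 1))" unfolding \<eta>_def using Wb by simp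
      hence "Wb * \<eta> * (b - a) = e * ((b - a) / (b - a + 1)) / 2" by simp
      also have "\<dots> \<le> e * 1 / 2" using L e ab by (intro divide_right_mono mult_left_mono) auto
      finally show ?thesis by simp
    qed
    define c where "c = 1 / (\<i> * complex_of_real M)"
    define F where "F k = cis (M * om k) * p k * c" for k
    let ?g = "\<lambda>k. cis (M * om k) * p' k * c"
    have Fd: "(F has_vector_derivative (?f1 k + ?g k)) (at k)" for k
    proof -
      have "((\<lambda>k. cis (M * om k) * p k) has_vector_derivative
          (cis (M * om k) * p' k + complex_of_real (M * w k) * (\<i> * cis (M * om k)) * p k)) (at k)"
        by (rule has_vector_derivative_mult[OF cis_om_vd p'(2)])
      hence "(F has_vector_derivative
          (cis (M * om k) * p' k + complex_of_real (M * w k) * (\<i> * cis (M * om k)) * p k) * c) (at k)"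
        unfolding F_def by (rule has_vector_derivative_mult_left)
      moreover have "(cis (M * om k) * p' k + complex_of_real (M * w k) * (\<i> * cis (M * om k)) * p k) * c = ?f1 k + ?g k"
        unfolding c_def using M0' by (simp add: field_simps)
      ultimately show ?thesis by simp
    qed
    have Fc: "continuous_on {a..b} F" unfolding F_def by (intro continuous_intros cis_om_cont pc)
    have "((\<lambda>k. ?f1 k + ?g k) has_integral (F b - F a)) {a..b}"
      by (rule fundamental_theorem_of_calculus_interior_strong[of "{}"]) (use ab Fd Fc in auto)
    hence I: "integral {a..b} (\<lambda>k. ?f1 k + ?g k) = F b - F a" by (rule integral_unique)
    have gc: "continuous_on {a..b} ?g" by (intro continuous_intros cis_om_cont p'c)
    have H: "integral {a..b} (\<lambda>k. ?f1 k + ?g k) = integral {a..b} ?f1 + integral {a..b} ?g"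
      by (rule integral_add) (auto intro: integrable_continuous_interval c1 gc)
    have "integral {a..b} ?f1 + integral {a..b} ?g = F b - F a"
      using H I by (rule trans[OF sym])
    hence eqf: "integral {a..b} ?f1 = F b - F a - integral {a..b} ?g" by (simp only: eq_diff_eq)
    have n1: "norm (F b - F a - integral {a..b} ?g) \<le> norm (F b - F a) + norm (integral {a..b} ?g)"
      by (rule norm_triangle_ineq4)
    have n2: "norm (F b - F a) \<le> norm (F b) + norm (F a)" by (rule norm_triangle_ineq4)
    have "norm (integral {a..b} ?f1) \<le> norm (F b) + norm (F a) + norm (integral {a..b} ?g)"
      unfolding eqf using n1 n2 by linarith
    moreover have "norm (F b) \<le> Pb / \<bar>M\<bar>" "norm (F a) \<le> Pb / \<bar>M\<bar>"
      unfolding F_def c_def using Pb ab by (auto simp: norm_mult norm_divide intro!: divide_right_mono)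
    moreover have "norm (integral {a..b} ?g) \<le> P'b / \<bar>M\<bar> * (b - a)"
    proof (rule integral_bound[OF ab gc])
      fix t assume "t \<in> {a..b}"
      thus "norm (?g t) \<le> P'b / \<bar>M\<bar>" unfolding c_def using P'b Mpos
        by (auto simp: norm_mult norm_divide divide_right_mono)
    qed
    ultimately have "norm (integral {a..b} ?f1) \<le> Pb / \<bar>M\<bar> + Pb / \<bar>M\<bar> + P'b / \<bar>M\<bar> * (b - a)"
      by linarith
    moreover have "Pb / \<bar>M\<bar> + Pb / \<bar>M\<bar> + P'b / \<bar>M\<bar> * (b - a) = (2 * Pb + (b - a) * P'b) / \<bar>M\<bar>"
      using Mpos by (simp add: field_simps)
    ultimately have b1: "norm (integral {a..b} ?f1) \<le> (2 * Pb + (b - a) * P'b) / \<bar>M\<bar>"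
      by simp
    have b1': "(2 * Pb + (b - a) * P'b) / \<bar>M\<bar> \<le> e / 2"
    proof -
      have K: "2 * Pb + (b - a) * P'b \<ge> 0" using Pb P'b ab by simp
      have "(2 * Pb + (b - a) * P'b) / \<bar>M\<bar> \<le> (2 * Pb + (b - a) * P'b) / M0"
        using M M0 K by (intro divide_left_mono) auto
      also have "\<dots> \<le> e / 2"
      proof -
        have "2 * (2 * Pb + (b - a) * P'b) \<le> e * M0" unfolding M0_def using e K by (simp add: field_simps)
        thus ?thesis using M0 e by (simp add: field_simps)
      qed
      finally show ?thesis .
    qed
    show "norm (integral {a..b} (\<lambda>k. cis (M * om k) * D k)) \<le> e"
      unfolding split using b1 b1' b2 b2' norm_triangle_ineq[of "integral {a..b} ?f1" "integral {a..b} ?f2"]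
      by linarith
  qed
qed

lemma w_ne: "cos k \<noteq> 0 \<Longrightarrow> w k \<noteq> 0"
  unfolding w_def using cc_pos[of k] by simp

lemma cos_ne1: "k \<in> {-pi..-pi/2-d} \<Longrightarrow> d > 0 \<Longrightarrow> cos k \<noteq> 0"
proof -
  assume k: "k \<in> {-pi..-pi/2-d}" and d: "d > 0"
  have "0 < cos (k + pi)" using k d by (intro cos_gt_zero_pi) auto
  thus ?thesis by simp
qed

lemma cos_ne3: "k \<in> {-pi/2+d..pi/2-d} \<Longrightarrow> d > 0 \<Longrightarrow> cos k \<noteq> 0"
proof -
  assume k: "k \<in> {-pi/2+d..pi/2-d}" and d: "d > 0"
  have "0 < cos k" using k d by (intro cos_gt_zero_pi) auto
  thus ?thesis by simp
qed

lemma cos_ne5: "k \<in> {pi/2+d..pi} \<Longrightarrow> d > 0 \<Longrightarrow> cos k \<noteq> 0"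
proof -
  assume k: "k \<in> {pi/2+d..pi}" and d: "d > 0"
  have "0 < cos (k - pi)" using k d by (intro cos_gt_zero_pi) auto
  thus ?thesis by simp
qed

lemma norm5: "norm (a+b+c+d+e) \<le> norm a + norm b + norm c + norm d + norm (e::'a::real_normed_vector)"
proof -
  have "norm (a+b+c+d+e) \<le> norm (a+b+c+d) + norm e" by (rule norm_triangle_ineq)
  moreover have "norm (a+b+c+d) \<le> norm (a+b+c) + norm d" by (rule norm_triangle_ineq)
  moreover have "norm (a+b+c) \<le> norm (a+b) + norm c" by (rule norm_triangle_ineq)
  moreover have "norm (a+b) \<le> norm a + norm b" by (rule norm_triangle_ineq)
  ultimately show ?thesis by linarith
qed

lemma RL_full:
  fixes D :: "real \<Rightarrow> complex"
  assumes D: "continuous_on {-pi..pi} D" and e: "e > 0"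
  shows "\<exists>M0. \<forall>M. \<bar>M\<bar> \<ge> M0 \<longrightarrow> norm (integral {-pi..pi} (\<lambda>k. cis (M * om k) * D k)) \<le> e"
proof -
  obtain Bd where Bd: "Bd > 0" "\<forall>x\<in>{-pi..pi}. norm (D x) \<le> Bd"
    using cont_bound[OF D compact_Icc] by blast
  define d where "d = min (pi/4) (e / (8 * Bd))"
  have d0: "d > 0" unfolding d_def using e Bd by simp
  have d1: "d \<le> pi/4" unfolding d_def by simp
  have d2: "d * Bd \<le> e / 8" unfolding d_def using Bd by (simp add: min_def field_simps)
  have e6: "e / 6 > 0" using e by simp
  obtain M1 where M1: "\<forall>M. \<bar>M\<bar> \<ge> M1 \<longrightarrow> norm (integral {-pi..-pi/2-d} (\<lambda>k. cis (M * om k) * D k)) \<le> e/6"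
    using RL_good[of "-pi" "-pi/2-d" D "e/6"] d1 d0 e6 continuous_on_subset[OF D] w_ne cos_ne1 by force
  obtain M3 where M3: "\<forall>M. \<bar>M\<bar> \<ge> M3 \<longrightarrow> norm (integral {-pi/2+d..pi/2-d} (\<lambda>k. cis (M * om k) * D k)) \<le> e/6"
    using RL_good[of "-pi/2+d" "pi/2-d" D "e/6"] d1 d0 e6 continuous_on_subset[OF D] w_ne cos_ne3 by force
  obtain M5 where M5: "\<forall>M. \<bar>M\<bar> \<ge> M5 \<longrightarrow> norm (integral {pi/2+d..pi} (\<lambda>k. cis (M * om k) * D k)) \<le> e/6"
    using RL_good[of "pi/2+d" "pi" D "e/6"] d1 d0 e6 continuous_on_subset[OF D] w_ne cos_ne5 by force
  show ?thesis
  proof (intro exI[of _ "max M1 (max M3 M5)"] allI impI)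
    fix M :: real assume M: "max M1 (max M3 M5) \<le> \<bar>M\<bar>"
    let ?f = "\<lambda>k. cis (M * om k) * D k"
    have fc: "continuous_on {-pi..pi} ?f" by (intro continuous_intros cis_om_cont D)
    have fi: "?f integrable_on {a..b}" if "-pi \<le> a" "b \<le> pi" for a b
      by (rule integrable_continuous_interval, rule continuous_on_subset[OF fc]) (use that in auto)
    have bad: "norm (integral {a..b} ?f) \<le> Bd * (b - a)" if "-pi \<le> a" "a \<le> b" "b \<le> pi" for a b
    proof (rule integral_bound[OF that(2)])
      show "continuous_on {a..b} ?f" by (rule continuous_on_subset[OF fc]) (use that in auto)
      fix t assume "t \<in> {a..b}"
      thus "norm (?f t) \<le> Bd" using Bd that by (auto simp: norm_mult)
    qed
    have pi4: "pi/4 < pi/2" "0 < pi" by auto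
    have c1: "integral {-pi..-pi/2-d} ?f + integral {-pi/2-d..pi} ?f = integral {-pi..pi} ?f"
      using d0 d1 pi4 by (intro Henstock_Kurzweil_Integration.integral_combine[OF _ _ fi]) auto
    have c2: "integral {-pi/2-d..-pi/2+d} ?f + integral {-pi/2+d..pi} ?f = integral {-pi/2-d..pi} ?f"
      using d0 d1 pi4 by (intro Henstock_Kurzweil_Integration.integral_combine[OF _ _ fi]) auto
    have c3: "integral {-pi/2+d..pi/2-d} ?f + integral {pi/2-d..pi} ?f = integral {-pi/2+d..pi} ?f"
      using d0 d1 pi4 by (intro Henstock_Kurzweil_Integration.integral_combine[OF _ _ fi]) auto
    have c4: "integral {pi/2-d..pi/2+d} ?f + integral {pi/2+d..pi} ?f = integral {pi/2-d..pi} ?f"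
      using d0 d1 pi4 by (intro Henstock_Kurzweil_Integration.integral_combine[OF _ _ fi]) auto
    have i2: "norm (integral {-pi/2-d..-pi/2+d} ?f) \<le> Bd * ((-pi/2+d) - (-pi/2-d))"
      using d0 d1 pi4 by (intro bad) auto
    have i4: "norm (integral {pi/2-d..pi/2+d} ?f) \<le> Bd * ((pi/2+d) - (pi/2-d))"
      using d0 d1 pi4 by (intro bad) auto
    have i1: "norm (integral {-pi..-pi/2-d} ?f) \<le> e/6" using M1 M by auto
    have i3: "norm (integral {-pi/2+d..pi/2-d} ?f) \<le> e/6" using M3 M by auto
    have i5: "norm (integral {pi/2+d..pi} ?f) \<le> e/6" using M5 M by auto
    have "integral {-pi..pi} ?f = integral {-pi..-pi/2-d} ?f + integral {-pi/2-d..-pi/2+d} ?f +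
        integral {-pi/2+d..pi/2-d} ?f + integral {pi/2-d..pi/2+d} ?f + integral {pi/2+d..pi} ?f"
      by (simp only: c1[symmetric] c2[symmetric] c3[symmetric] c4[symmetric] add.assoc)
    hence "norm (integral {-pi..pi} ?f) \<le> norm (integral {-pi..-pi/2-d} ?f) + norm (integral {-pi/2-d..-pi/2+d} ?f) +
        norm (integral {-pi/2+d..pi/2-d} ?f) + norm (integral {pi/2-d..pi/2+d} ?f) + norm (integral {pi/2+d..pi} ?f)"
      by (simp only: norm5)
    moreover have "Bd * ((-pi/2+d) - (-pi/2-d)) \<le> e/4" "Bd * ((pi/2+d) - (pi/2-d)) \<le> e/4"
      using d2 by (simp_all add: algebra_simps)
    ultimately show "norm (integral {-pi..pi} ?f) \<le> e" using i1 i2 i3 i4 i5 by linarith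
  qed
qed

lemma Ph_cis: "n \<ge> 1 \<Longrightarrow> Ph n k = cis (- (real n * om k)) * a1 k + (-1)^n * cis (real n * om k) * a2 k"
proof -
  assume n: "n \<ge> 1"
  have "Ph n k = cnj (CC k) ^ n * a1 k + (- CC k) ^ n * a2 k" using closed_form[OF n] by blast
  also have "cnj (CC k) ^ n = cis (- (real n * om k))"
  proof -
    have "cnj (CC k) ^ n = cis (- om k) ^ n" by (simp only: cis_mom)
    also have "\<dots> = cis (real n * (- om k))" by (rule Complex.DeMoivre)
    finally show ?thesis by simp
  qed
  also have "(- CC k) ^ n = (-1)^n * cis (real n * om k)"
  proof -
    have "(- CC k) ^ n = ((-1) * cis (om k)) ^ n" by (simp add: cis_om)
    also have "\<dots> = (-1)^n * cis (om k) ^ n" by (rule power_mult_distrib)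
    also have "cis (om k) ^ n = cis (real n * om k)" by (rule Complex.DeMoivre)
    finally show ?thesis .
  qed
  finally show ?thesis by simp
qed

lemma alg4:
  fixes s X1 X2 Y1 Y2 a b c d :: complex
  assumes "s * s = 1"
  shows "(X1*a + s*X2*b)*(Y1*c + s*Y2*d) = X1*Y1*a*c + X2*Y2*b*d + s*(X1*Y2*a*d) + s*(X2*Y1*b*c)"
  using assms by algebra

lemma decomp:
  assumes n: "n \<ge> 1"
  shows "Ph n k * cnj (Ph n (k - \<theta>)) = Gt (-1) a1 a1 n \<theta> k + Gt 1 a2 a2 n \<theta> k
     + (-1)^n * (cis (-(2 * real n) * om k) * Gt 1 a1 a2 n \<theta> k)
     + (-1)^n * (cis ((2 * real n) * om k) * Gt (-1) a2 a1 n \<theta> k)"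
proof -
  define x where "x = real n * om k"
  define y where "y = real n * om (k - \<theta>)"
  have P1: "Ph n k = cis (-x) * a1 k + (-1)^n * cis x * a2 k" unfolding x_def by (rule Ph_cis[OF n])
  have P2: "cnj (Ph n (k - \<theta>)) = cis y * cnj (a1 (k - \<theta>)) + (-1)^n * cis (-y) * cnj (a2 (k - \<theta>))"
    unfolding Ph_cis[OF n] y_def by (simp add: cis_cnj)
  have g1: "Gt (-1) a1 a1 n \<theta> k = cis (-x) * cis y * a1 k * cnj (a1 (k - \<theta>))"
    unfolding Gt_def x_def y_def by (simp add: cis_mult algebra_simps)
  have g2: "Gt 1 a2 a2 n \<theta> k = cis x * cis (-y) * a2 k * cnj (a2 (k - \<theta>))"
    unfolding Gt_def x_def y_def by (simp add: cis_mult algebra_simps)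
  have g3: "cis (-(2 * real n) * om k) * Gt 1 a1 a2 n \<theta> k = cis (-x) * cis (-y) * a1 k * cnj (a2 (k - \<theta>))"
    unfolding Gt_def x_def y_def by (simp add: cis_mult algebra_simps)
  have g4: "cis ((2 * real n) * om k) * Gt (-1) a2 a1 n \<theta> k = cis x * cis y * a2 k * cnj (a1 (k - \<theta>))"
    unfolding Gt_def x_def y_def by (simp add: cis_mult algebra_simps)
  have s: "((-1::complex)^n) * (-1)^n = 1" by (simp add: power_mult_distrib[symmetric])
  show ?thesis unfolding P1 P2 g1 g2 g3 g4 alg4[OF s]
    by (simp only: mult_ac)
qed

lemma Lt_cont:
  assumes "continuous_on UNIV A" "continuous_on UNIV B"
  shows "continuous_on S (Lt \<sigma> \<xi> A B)"
proof -
  have "continuous_on S A" "continuous_on S B" "continuous_on S w"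
    using assms w_cont by (auto intro: continuous_on_subset)
  thus ?thesis unfolding Lt_def[abs_def] by (intro continuous_intros) auto
qed

lemma cisL_cont:
  assumes "continuous_on UNIV A" "continuous_on UNIV B"
  shows "continuous_on S (\<lambda>k. cis (M * om k) * Lt \<sigma> \<xi> A B k)"
  by (intro continuous_intros cis_om_cont Lt_cont assms)

lemma main_lim:
  "(\<lambda>n. integral {-pi..pi} (\<lambda>k. Ph n k * cnj (Ph n (k - \<xi> / real n))))
     \<longlonglongrightarrow> integral {-pi..pi} (\<lambda>k. Lt (-1) \<xi> a1 a1 k + Lt 1 \<xi> a2 a2 k)"
proof (rule LIMSEQ_I)
  fix r :: real assume r: "r > 0"
  define \<epsilon> where "\<epsilon> = r / (32 * pi)"
  have ep: "\<epsilon> > 0" unfolding \<epsilon>_def using r by simp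
  obtain Na where Na: "\<forall>n\<ge>Na. \<forall>k\<in>{-pi..pi}. norm (Gt (-1) a1 a1 n (\<xi> / real n) k - Lt (-1) \<xi> a1 a1 k) \<le> \<epsilon>"
    using UL[OF a1_cont a1_cont _ ep, of "-1" \<xi>] by auto
  obtain Nb where Nb: "\<forall>n\<ge>Nb. \<forall>k\<in>{-pi..pi}. norm (Gt 1 a2 a2 n (\<xi> / real n) k - Lt 1 \<xi> a2 a2 k) \<le> \<epsilon>"
    using UL[OF a2_cont a2_cont _ ep, of 1 \<xi>] by auto
  obtain Nc where Nc: "\<forall>n\<ge>Nc. \<forall>k\<in>{-pi..pi}. norm (Gt 1 a1 a2 n (\<xi> / real n) k - Lt 1 \<xi> a1 a2 k) \<le> \<epsilon>"
    using UL[OF a1_cont a2_cont _ ep, of 1 \<xi>] by auto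
  obtain Nd where Nd: "\<forall>n\<ge>Nd. \<forall>k\<in>{-pi..pi}. norm (Gt (-1) a2 a1 n (\<xi> / real n) k - Lt (-1) \<xi> a2 a1 k) \<le> \<epsilon>"
    using UL[OF a2_cont a1_cont _ ep, of "-1" \<xi>] by auto
  have r4: "r / 4 > 0" using r by simp
  obtain M2 where M2: "\<forall>M. \<bar>M\<bar> \<ge> M2 \<longrightarrow> norm (integral {-pi..pi} (\<lambda>k. cis (M * om k) * Lt 1 \<xi> a1 a2 k)) \<le> r/4"
    using RL_full[OF Lt_cont[OF a1_cont a2_cont] r4] by blast
  obtain M3 where M3: "\<forall>M. \<bar>M\<bar> \<ge> M3 \<longrightarrow> norm (integral {-pi..pi} (\<lambda>k. cis (M * om k) * Lt (-1) \<xi> a2 a1 k)) \<le> r/4"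
    using RL_full[OF Lt_cont[OF a2_cont a1_cont] r4] by blast
  obtain Ne :: nat where Ne: "Ne \<ge> 1" "real Ne > max M2 M3" using eventually_N by blast
  show "\<exists>no. \<forall>n\<ge>no. norm (integral {-pi..pi} (\<lambda>k. Ph n k * cnj (Ph n (k - \<xi> / real n))) -
      integral {-pi..pi} (\<lambda>k. Lt (-1) \<xi> a1 a1 k + Lt 1 \<xi> a2 a2 k)) < r"
  proof (intro exI[of _ "max (max Na Nb) (max (max Nc Nd) Ne)"] allI impI)
    fix n assume n: "max (max Na Nb) (max (max Nc Nd) Ne) \<le> n"
    hence n1: "n \<ge> 1" and nN: "n \<ge> Na" "n \<ge> Nb" "n \<ge> Nc" "n \<ge> Nd" "n \<ge> Ne" using Ne by auto
    define \<theta> where "\<theta> = \<xi> / real n"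
    define f where "f k = Ph n k * cnj (Ph n (k - \<theta>))" for k
    define c where "c = ((-1)^n :: complex)"
    have cn: "norm c = 1" unfolding c_def by (simp add: norm_power)
    define g2 where "g2 k = cis (-(2 * real n) * om k) * Lt 1 \<xi> a1 a2 k" for k
    define g3 where "g3 k = cis ((2 * real n) * om k) * Lt (-1) \<xi> a2 a1 k" for k
    define L where "L k = Lt (-1) \<xi> a1 a1 k + Lt 1 \<xi> a2 a2 k" for k
    define R where "R k = L k + c * g2 k + c * g3 k" for k
    have fi: "f integrable_on {-pi..pi}" unfolding f_def using parseval by blast
    have Lc: "continuous_on {-pi..pi} L" unfolding L_def[abs_def]
      by (intro continuous_intros Lt_cont a1_cont a2_cont)
    have g2c: "continuous_on {-pi..pi} g2" unfolding g2_def[abs_def] by (intro cisL_cont a1_cont a2_cont)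
    have g3c: "continuous_on {-pi..pi} g3" unfolding g3_def[abs_def] by (intro cisL_cont a1_cont a2_cont)
    have Li: "L integrable_on {-pi..pi}" by (rule integrable_continuous_interval[OF Lc])
    have g2i: "g2 integrable_on {-pi..pi}" by (rule integrable_continuous_interval[OF g2c])
    have g3i: "g3 integrable_on {-pi..pi}" by (rule integrable_continuous_interval[OF g3c])
    have Ri: "R integrable_on {-pi..pi}" unfolding R_def[abs_def]
      by (intro integrable_add integrable_on_mult_right Li g2i g3i)
    have pw: "norm (f k - R k) \<le> 4 * \<epsilon>" if k: "k \<in> {-pi..pi}" for k
    proof -
      have "f k - R k = (Gt (-1) a1 a1 n \<theta> k - Lt (-1) \<xi> a1 a1 k) + (Gt 1 a2 a2 n \<theta> k - Lt 1 \<xi> a2 a2 k)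
          + c * (cis (-(2 * real n) * om k) * (Gt 1 a1 a2 n \<theta> k - Lt 1 \<xi> a1 a2 k))
          + c * (cis ((2 * real n) * om k) * (Gt (-1) a2 a1 n \<theta> k - Lt (-1) \<xi> a2 a1 k))"
        unfolding f_def R_def L_def g2_def g3_def decomp[OF n1] c_def by (simp add: algebra_simps)
      also have "norm \<dots> \<le> \<epsilon> + \<epsilon> + \<epsilon> + \<epsilon>"
      proof -
        have e1: "norm (Gt (-1) a1 a1 n \<theta> k - Lt (-1) \<xi> a1 a1 k) \<le> \<epsilon>" using Na nN k unfolding \<theta>_def by auto
        have e2: "norm (Gt 1 a2 a2 n \<theta> k - Lt 1 \<xi> a2 a2 k) \<le> \<epsilon>" using Nb nN k unfolding \<theta>_def by auto
        have e3: "norm (c * (cis (-(2 * real n) * om k) * (Gt 1 a1 a2 n \<theta> k - Lt 1 \<xi> a1 a2 k))) \<le> \<epsilon>"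
          using Nc nN k cn unfolding \<theta>_def by (auto simp: norm_mult)
        have e4: "norm (c * (cis ((2 * real n) * om k) * (Gt (-1) a2 a1 n \<theta> k - Lt (-1) \<xi> a2 a1 k))) \<le> \<epsilon>"
          using Nd nN k cn unfolding \<theta>_def by (auto simp: norm_mult)
        show ?thesis using e1 e2 e3 e4 norm_triangle_ineq
          by (smt (verit, ccfv_SIG) norm_triangle_ineq)
      qed
      finally show ?thesis by simp
    qed
    have "norm (integral {-pi..pi} (\<lambda>k. f k - R k)) \<le> 4 * \<epsilon> * Henstock_Kurzweil_Integration.content {-pi..pi}"
      by (rule has_integral_bound_real[where S="{}"]) (use ep pw fi Ri in \<open>auto intro: integrable_integral integrable_diff\<close>)
    also have "\<dots> = r / 4" unfolding \<epsilon>_def by simp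
    finally have b1: "norm (integral {-pi..pi} f - integral {-pi..pi} R) \<le> r / 4"
      using Henstock_Kurzweil_Integration.integral_diff[OF fi Ri] by simp
    have IR: "integral {-pi..pi} R = integral {-pi..pi} L + c * integral {-pi..pi} g2 + c * integral {-pi..pi} g3"
    proof -
      have "integral {-pi..pi} R = integral {-pi..pi} (\<lambda>k. L k + c * g2 k) + integral {-pi..pi} (\<lambda>k. c * g3 k)"
        unfolding R_def by (rule Henstock_Kurzweil_Integration.integral_add; intro integrable_add integrable_on_mult_right Li g2i g3i)
      also have "integral {-pi..pi} (\<lambda>k. L k + c * g2 k) = integral {-pi..pi} L + integral {-pi..pi} (\<lambda>k. c * g2 k)"
        by (rule Henstock_Kurzweil_Integration.integral_add) (auto intro: integrable_on_mult_right Li g2i)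
      finally show ?thesis by simp
    qed
    have nM: "real n \<ge> real Ne" using nN by simp
    have b2: "norm (integral {-pi..pi} g2) \<le> r/4"
      unfolding g2_def using M2 Ne nM by (intro M2[rule_format]) auto
    have b3: "norm (integral {-pi..pi} g3) \<le> r/4"
      unfolding g3_def using M3 Ne nM by (intro M3[rule_format]) auto
    have "norm (integral {-pi..pi} R - integral {-pi..pi} L) \<le> norm (integral {-pi..pi} g2) + norm (integral {-pi..pi} g3)"
    proof -
      have "integral {-pi..pi} R - integral {-pi..pi} L = c * integral {-pi..pi} g2 + c * integral {-pi..pi} g3"
        unfolding IR by simp
      also have "norm \<dots> \<le> norm (c * integral {-pi..pi} g2) + norm (c * integral {-pi..pi} g3)"
        by (rule norm_triangle_ineq)
      also have "\<dots> = norm (integral {-pi..pi} g2) + norm (integral {-pi..pi} g3)"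
        using cn by (simp add: norm_mult)
      finally show ?thesis .
    qed
    hence b4: "norm (integral {-pi..pi} R - integral {-pi..pi} L) \<le> r/2" using b2 b3 by simp
    have "norm (integral {-pi..pi} f - integral {-pi..pi} L) \<le>
        norm (integral {-pi..pi} f - integral {-pi..pi} R) + norm (integral {-pi..pi} R - integral {-pi..pi} L)"
      by (rule norm_diff_triangle_ineq[THEN order_trans[rotated]]) simp
    hence "norm (integral {-pi..pi} f - integral {-pi..pi} L) \<le> 3 * r / 4" using b1 b4 by simp
    also have "\<dots> < r" using r by simp
    finally show "norm (integral {-pi..pi} (\<lambda>k. Ph n k * cnj (Ph n (k - \<xi> / real n))) -
      integral {-pi..pi} (\<lambda>k. Lt (-1) \<xi> a1 a1 k + Lt 1 \<xi> a2 a2 k)) < r"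
      unfolding f_def \<theta>_def L_def .
  qed
qed

lemma lhs_eq:
  "(1/2) * (\<Sum>l = 0..n. exp (\<i> * complex_of_real (\<xi> * (real n - 2 * real l) / real n)) *
            complex_of_real ((pH l (n - l))\<^sup>2 - (qH l (n - l))\<^sup>2))
   = (Phi n (\<xi> / real n) - Phi n ((-\<xi>) / real n)) / 2"
proof -
  let ?g = "\<lambda>l. cis (\<xi> / real n * (real n - 2 * real l)) * complex_of_real ((pH (n - l) l)\<^sup>2)"
  have e1: "(\<Sum>l = 0..n. exp (\<i> * complex_of_real (\<xi> * (real n - 2 * real l) / real n)) *
            complex_of_real ((pH l (n - l))\<^sup>2 - (qH l (n - l))\<^sup>2))
      = (\<Sum>l = 0..n. cis (\<xi> / real n * (real n - 2 * real l)) * complex_of_real ((pH l (n - l))\<^sup>2))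
        - (\<Sum>l = 0..n. ?g l)"
    unfolding sum_subtractf[symmetric]
  proof (intro sum.cong refl)
    fix l
    have a: "\<xi> * (real n - 2 * real l) / real n = \<xi> / real n * (real n - 2 * real l)" by simp
    show "exp (\<i> * complex_of_real (\<xi> * (real n - 2 * real l) / real n)) *
            complex_of_real ((pH l (n - l))\<^sup>2 - (qH l (n - l))\<^sup>2) =
          cis (\<xi> / real n * (real n - 2 * real l)) * complex_of_real ((pH l (n - l))\<^sup>2) - ?g l"
      unfolding a cis_conv_exp qH_sq by (simp only: of_real_diff right_diff_distrib)
  qed
  have e2: "(\<Sum>l = 0..n. ?g l) = (\<Sum>l = 0..n. ?g (n + 0 - l))"
    by (rule sum.atLeastAtMost_rev)
  also have "\<dots> = (\<Sum>l = 0..n. cis ((-\<xi>) / real n * (real n - 2 * real l)) * complex_of_real ((pH l (n - l))\<^sup>2))"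
  proof (intro sum.cong refl)
    fix l assume "l \<in> {0..n}"
    hence l: "l \<le> n" by simp
    have "real (n - l) = real n - real l" using l by (simp add: of_nat_diff)
    moreover have "n - (n - l) = l" using l by simp
    ultimately show "?g (n + 0 - l) = cis ((-\<xi>) / real n * (real n - 2 * real l)) * complex_of_real ((pH l (n - l))\<^sup>2)"
      by (simp add: algebra_simps)
  qed
  finally have e2': "(\<Sum>l = 0..n. ?g l) = Phi n ((-\<xi>) / real n)"
    unfolding Phi_def atLeast0AtMost .
  show ?thesis unfolding e1 e2' unfolding Phi_def atLeast0AtMost by simp
qed

definition II :: "nat \<Rightarrow> real \<Rightarrow> complex" where
  "II n \<xi> = integral {-pi..pi} (\<lambda>k. Ph n k * cnj (Ph n (k - \<xi> / real n)))"
definition JJ :: "real \<Rightarrow> complex" where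
  "JJ \<xi> = integral {-pi..pi} (\<lambda>k. Lt (-1) \<xi> a1 a1 k + Lt 1 \<xi> a2 a2 k)"

lemma Phi_II: "Phi n (\<xi> / real n) = II n \<xi> / (2 * pi)"
  unfolding II_def using integral_unique[OF parseval[of n "\<xi> / real n"]] by simp

lemma lhs_lim:
  "(\<lambda>n::nat. (1/2) * (\<Sum>l = 0..n.
            exp (\<i> * complex_of_real (\<xi> * (real n - 2 * real l) / real n)) *
            complex_of_real ((pH l (n - l))\<^sup>2 - (qH l (n - l))\<^sup>2)))
         \<longlonglongrightarrow> (JJ \<xi> - JJ (-\<xi>)) / (4 * pi)"
proof -
  have eq: "(1/2) * (\<Sum>l = 0..n.
            exp (\<i> * complex_of_real (\<xi> * (real n - 2 * real l) / real n)) *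
            complex_of_real ((pH l (n - l))\<^sup>2 - (qH l (n - l))\<^sup>2))
       = (II n \<xi> - II n (-\<xi>)) / (4 * pi)" for n
    unfolding lhs_eq Phi_II by (simp add: field_simps)
  have "(\<lambda>n. (II n \<xi> - II n (-\<xi>)) / (4 * pi)) \<longlonglongrightarrow> (JJ \<xi> - JJ (-\<xi>)) / (4 * pi)"
    unfolding II_def JJ_def by (intro tendsto_intros main_lim) simp
  thus ?thesis unfolding eq .
qed

lemma cnj_self: "z * cnj z = complex_of_real ((Re z)^2 + (Im z)^2)"
  by (simp add: complex_eq_iff power2_eq_square)

lemma AA: "a1 k * cnj (a1 k) - a2 k * cnj (a2 k) = complex_of_real (w k)"
proof -
  have c: "cc k > 0" by (rule cc_pos)
  have r1: "Re (a1 k) = (cos k + cc k / sqrt 2) / (2 * cc k)" "Im (a1 k) = (ss k / sqrt 2 - sin k) / (2 * cc k)"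
    unfolding a1_def CC_def rr_def dd_def using c by (simp_all add: Re_divide Im_divide power2_eq_square field_simps s2x)
  have r2: "Re (a2 k) = (cc k / sqrt 2 - cos k) / (2 * cc k)" "Im (a2 k) = (sin k - ss k / sqrt 2) / (2 * cc k)"
    unfolding a2_def CC_def rr_def dd_def using c by (simp_all add: Re_divide Im_divide power2_eq_square field_simps s2x)
  have "(Re (a1 k))^2 + (Im (a1 k))^2 - ((Re (a2 k))^2 + (Im (a2 k))^2) = w k"
  proof -
    define t where "t = cc k / sqrt 2"
    have "(Re (a1 k))^2 + (Im (a1 k))^2 - ((Re (a2 k))^2 + (Im (a2 k))^2)
        = ((cos k + t)^2 - (t - cos k)^2) / (2 * cc k)^2"
      unfolding r1 r2 t_def[symmetric] by (simp add: power_divide diff_divide_distrib[symmetric] add_divide_distrib[symmetric] power2_diff power2_sum algebra_simps)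
    also have "\<dots> = 4 * t * cos k / (4 * (cc k)^2)" by (simp add: power2_eq_square algebra_simps)
    also have "\<dots> = w k" unfolding t_def w_def using c by (simp add: power2_eq_square field_simps)
    finally show ?thesis .
  qed
  thus ?thesis unfolding cnj_self by (simp flip: of_real_add of_real_diff)
qed

lemma JJ_diff:
  "JJ \<xi> - JJ (-\<xi>) = integral {-pi..pi} (\<lambda>k. (cis (-(\<xi> * w k)) - cis (\<xi> * w k)) * complex_of_real (w k))"
proof -
  have i: "(\<lambda>k. Lt (-1) x a1 a1 k + Lt 1 x a2 a2 k) integrable_on {-pi..pi}" for x
    by (intro integrable_continuous_interval continuous_intros Lt_cont a1_cont a2_cont)
  have "JJ \<xi> - JJ (-\<xi>) = integral {-pi..pi} (\<lambda>k. (Lt (-1) \<xi> a1 a1 k + Lt 1 \<xi> a2 a2 k) - (Lt (-1) (-\<xi>) a1 a1 k + Lt 1 (-\<xi>) a2 a2 k))"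
    unfolding JJ_def by (rule Henstock_Kurzweil_Integration.integral_diff[symmetric, OF i i])
  also have "\<dots> = integral {-pi..pi} (\<lambda>k. (cis (-(\<xi> * w k)) - cis (\<xi> * w k)) * complex_of_real (w k))"
  proof (rule integral_cong)
    fix k
    have "(Lt (-1) \<xi> a1 a1 k + Lt 1 \<xi> a2 a2 k) - (Lt (-1) (-\<xi>) a1 a1 k + Lt 1 (-\<xi>) a2 a2 k)
        = (cis (-(\<xi> * w k)) - cis (\<xi> * w k)) * (a1 k * cnj (a1 k) - a2 k * cnj (a2 k))"
      unfolding Lt_def by (simp add: algebra_simps)
    thus "(Lt (-1) \<xi> a1 a1 k + Lt 1 \<xi> a2 a2 k) - (Lt (-1) (-\<xi>) a1 a1 k + Lt 1 (-\<xi>) a2 a2 k)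
        = (cis (-(\<xi> * w k)) - cis (\<xi> * w k)) * complex_of_real (w k)" unfolding AA .
  qed
  finally show ?thesis .
qed

lemma w_even: "w (-k) = w k" by (simp add: w_def cc_def)
lemma w_refl: "w (pi - k) = - w k" by (simp add: w_def cc_def)

lemma int_reflect0:
  fixes f :: "real \<Rightarrow> complex"
  assumes c: "continuous_on {0..pi} f" and ev: "\<And>x. f (-x) = f x"
  shows "integral {-pi..0} f = integral {0..pi} f"
proof -
  have "(f has_integral integral {0..pi} f) {0..pi}"
    by (rule integrable_integral, rule integrable_continuous_interval[OF c])
  hence "((\<lambda>x. f (-x)) has_integral integral {0..pi} f) {-pi..-0}"
    by (subst has_integral_reflect_real)
  hence "(f has_integral integral {0..pi} f) {-pi..0}" using ev by simp
  thus ?thesis by (rule integral_unique)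
qed

lemma int_pi_minus:
  fixes f :: "real \<Rightarrow> complex"
  assumes c: "continuous_on {0..pi} f"
  shows "integral {0..pi} (\<lambda>x. f (pi - x)) = integral {0..pi} f"
proof -
  have "((\<lambda>x. (-1) *\<^sub>R f (pi - x)) has_integral (integral {pi - 0..pi - pi} f - integral {pi - pi..pi - 0} f)) {0..pi}"
    by (rule has_integral_substitution_general[of "{}" 0 pi "\<lambda>u. pi - u" 0 pi f "\<lambda>_. -1"])
       (auto intro!: derivative_eq_intros continuous_intros c)
  hence "((\<lambda>x. - f (pi - x)) has_integral (- integral {0..pi} f)) {0..pi}" by simp
  hence "((\<lambda>x. - (- f (pi - x))) has_integral - (- integral {0..pi} f)) {0..pi}"
    by (rule has_integral_neg)
  hence "((\<lambda>x. f (pi - x)) has_integral (integral {0..pi} f)) {0..pi}" by simp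
  thus ?thesis by (rule integral_unique)
qed

definition QQ :: "real \<Rightarrow> complex" where
  "QQ \<xi> = integral {0..pi} (\<lambda>k. cis (\<xi> * w k) * complex_of_real (w k))"

lemma Jdiff_Q:
  "integral {-pi..pi} (\<lambda>k. (cis (-(\<xi> * w k)) - cis (\<xi> * w k)) * complex_of_real (w k)) = -4 * QQ \<xi>"
proof -
  define F where "F k = (cis (-(\<xi> * w k)) - cis (\<xi> * w k)) * complex_of_real (w k)" for k
  have wc: "continuous_on S w" for S using continuous_on_subset[OF w_cont] by auto
  have Fc: "continuous_on S F" for S unfolding F_def[abs_def] by (intro continuous_intros wc)
  have Fev: "F (-x) = F x" for x unfolding F_def w_even ..
  have "integral {-pi..0} F + integral {0..pi} F = integral {-pi..pi} F"
    by (rule Henstock_Kurzweil_Integration.integral_combine) (auto intro: integrable_continuous_interval Fc)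
  hence s1: "integral {-pi..pi} F = 2 * integral {0..pi} F" using int_reflect0[OF Fc[of "{0..pi}"] Fev] by simp
  let ?A = "\<lambda>k. cis (-(\<xi> * w k)) * complex_of_real (w k)"
  let ?B = "\<lambda>k. cis (\<xi> * w k) * complex_of_real (w k)"
  have Ac: "continuous_on S ?A" for S by (intro continuous_intros wc)
  have Bc: "continuous_on S ?B" for S by (intro continuous_intros wc)
  have s2: "integral {0..pi} F = integral {0..pi} ?A - integral {0..pi} ?B"
    unfolding F_def left_diff_distrib
    by (rule Henstock_Kurzweil_Integration.integral_diff) (auto intro: integrable_continuous_interval Ac Bc)
  have "integral {0..pi} ?A = integral {0..pi} (\<lambda>x. ?A (pi - x))" using int_pi_minus[OF Ac[of "{0..pi}"]] by simp
  also have "\<dots> = integral {0..pi} (\<lambda>x. - ?B x)" unfolding w_refl by simp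
  also have "\<dots> = - integral {0..pi} ?B" by (rule integral_neg)
  finally have s3: "integral {0..pi} ?A = - QQ \<xi>" unfolding QQ_def .
  show ?thesis unfolding F_def[symmetric] s1 s2 s3 QQ_def[symmetric] by simp
qed

definition yy :: "real \<Rightarrow> real" where "yy x = x / sqrt (1 - x^2)"
definition kk :: "real \<Rightarrow> real" where "kk x = arccos (yy x)"
definition kd :: "real \<Rightarrow> real" where "kd x = -1 / ((1 - x^2) * sqrt (1 - 2 * x^2))"

lemma xsq_le: assumes "x \<in> {-(1/sqrt 2)..1/sqrt 2}" shows "x^2 \<le> 1/2"
proof -
  have "\<bar>x\<bar> \<le> \<bar>1/sqrt 2\<bar>" using assms by auto
  hence "x^2 \<le> (1/sqrt 2)^2" by (simp only: abs_le_square_iff)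
  thus ?thesis by (simp add: power_divide)
qed

lemma xsq_lt: assumes "x \<in> {-(1/sqrt 2)<..<1/sqrt 2}" shows "x^2 < 1/2"
proof -
  have "\<bar>x\<bar> < 1/sqrt 2" using assms by auto
  hence "\<bar>x\<bar>^2 < (1/sqrt 2)^2" by (intro power_strict_mono) auto
  thus ?thesis by (simp add: power_divide)
qed

lemma w_alt: "w k = cos k / sqrt (1 + (cos k)^2)"
proof -
  have "sqrt 2 * cc k = sqrt (2 * (1 - (sin k)^2 / 2))" unfolding cc_def by (simp only: real_sqrt_mult)
  also have "\<dots> = sqrt (1 + (cos k)^2)"
    by (rule arg_cong[where f=sqrt]) (use sin_cos_squared_add[of k] in \<open>simp add: algebra_simps\<close>)
  finally show ?thesis unfolding w_def by simp
qed

lemma yy_sq: "x^2 < 1 \<Longrightarrow> (yy x)^2 = x^2 / (1 - x^2)"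
  unfolding yy_def by (simp add: power_divide)

lemma yy_bound: assumes "x^2 \<le> 1/2" shows "-1 \<le> yy x" "yy x \<le> 1"
proof -
  have "(yy x)^2 \<le> 1"
  proof -
    have p: "1 - x^2 > 0" using assms by simp
    have "(yy x)^2 = x^2 / (1 - x^2)" using assms by (intro yy_sq) simp
    also have "\<dots> \<le> 1" using p assms by (simp add: divide_le_eq)
    finally show ?thesis .
  qed
  hence "\<bar>yy x\<bar> \<le> 1" by (metis abs_square_le_1)
  thus "-1 \<le> yy x" "yy x \<le> 1" by auto
qed

lemma yy_bound_strict: assumes "x^2 < 1/2" shows "-1 < yy x" "yy x < 1"
proof -
  have "(yy x)^2 < 1"
  proof -
    have p: "1 - x^2 > 0" using assms by simp
    have "(yy x)^2 = x^2 / (1 - x^2)" using assms by (intro yy_sq) simp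
    also have "\<dots> < 1" using p assms by (simp add: divide_less_eq)
    finally show ?thesis .
  qed
  hence "\<bar>yy x\<bar> < 1" by (metis abs_square_less_1)
  thus "-1 < yy x" "yy x < 1" by auto
qed

lemma w_kk: assumes "x^2 \<le> 1/2" shows "w (kk x) = x"
proof -
  have p: "1 - x^2 > 0" using assms by simp
  define S where "S = sqrt (1 - x^2)"
  have S: "S > 0" "S^2 = 1 - x^2" unfolding S_def using p by auto
  have c: "cos (kk x) = yy x" unfolding kk_def using yy_bound[OF assms] by simp
  have "1 + (yy x)^2 = 1 / S^2" using S p unfolding yy_def S_def[symmetric]
    by (simp add: power_divide field_simps)
  hence "sqrt (1 + (yy x)^2) = 1 / S" using S by (simp add: real_sqrt_divide S_def)
  thus ?thesis unfolding w_alt c using S unfolding yy_def by (simp add: S_def)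
qed

lemma kk_deriv: assumes "x^2 < 1/2" shows "(kk has_real_derivative kd x) (at x)"
proof -
  have p: "1 - x^2 > 0" using assms by simp
  define S where "S = sqrt (1 - x^2)"
  have S: "S > 0" "S * S = 1 - x^2" unfolding S_def using p by auto
  define T where "T = sqrt (1 - 2 * x^2)"
  have T: "T > 0" "T * T = 1 - 2 * x^2" unfolding T_def using assms by auto
  have d0: "((\<lambda>x. 1 - x^2) has_real_derivative (- (2 * x))) (at x)"
    by (auto intro!: derivative_eq_intros)
  have dS: "((\<lambda>x. sqrt (1 - x^2)) has_real_derivative (inverse (sqrt (1 - x^2)) / 2 * (- (2 * x)))) (at x)"
    by (rule DERIV_chain2[OF DERIV_real_sqrt[OF p] d0])
  have dY: "(yy has_real_derivative ((1 * S - (inverse S / 2 * (- (2 * x))) * x) / S ^ Suc (Suc 0))) (at x)"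
    unfolding yy_def[abs_def] S_def using DERIV_quotient[OF DERIV_ident dS] p by simp
  have dK: "(kk has_real_derivative (inverse (- sqrt (1 - (yy x)^2)) * ((1 * S - (inverse S / 2 * (- (2 * x))) * x) / S ^ Suc (Suc 0)))) (at x)"
    unfolding kk_def[abs_def] by (rule DERIV_chain2[OF DERIV_arccos dY]) (use yy_bound_strict[OF assms] in auto)
  have q: "sqrt (1 - (yy x)^2) = T / S"
  proof -
    have "1 - (yy x)^2 = (T / S)^2" unfolding yy_def S_def[symmetric] using S T
      by (simp add: power_divide field_simps power2_eq_square)
    thus ?thesis using S T by simp
  qed
  have "inverse (- sqrt (1 - (yy x)^2)) * ((1 * S - (inverse S / 2 * (- (2 * x))) * x) / S ^ Suc (Suc 0)) = kd x"
    unfolding q kd_def T_def[symmetric] S(2)[symmetric] using S T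
    by (simp add: field_simps power2_eq_square)
  with dK show ?thesis by simp
qed

lemma kk_cont: "continuous_on {-(1/sqrt 2)..1/sqrt 2} kk"
proof -
  have "continuous_on {-(1/sqrt 2)..1/sqrt 2} yy"
  proof -
    have "\<forall>x\<in>{-(1/sqrt 2)..1/sqrt 2}. sqrt (1 - x^2) \<noteq> 0"
    proof
      fix x assume "x \<in> {-(1/sqrt 2)..1/sqrt 2}"
      hence "x^2 \<le> 1/2" by (rule xsq_le)
      thus "sqrt (1 - x^2) \<noteq> 0" by simp
    qed
    thus ?thesis unfolding yy_def[abs_def] by (intro continuous_intros) auto
  qed
  thus ?thesis unfolding kk_def[abs_def]
    by (intro continuous_intros) (auto dest: xsq_le intro: yy_bound)
qed

lemma yy_end: "yy (1/sqrt 2) = 1" "yy (-(1/sqrt 2)) = -1"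
proof -
  have "sqrt (1 - (1/sqrt 2)^2) = 1/sqrt 2" by (simp add: power_divide real_sqrt_divide)
  thus "yy (1/sqrt 2) = 1" "yy (-(1/sqrt 2)) = -1" unfolding yy_def by simp_all
qed

lemma sub_main:
  "((\<lambda>x. complex_of_real (kd x) * (cis (\<xi> * x) * complex_of_real x)) has_integral - QQ \<xi>) {-(1/sqrt 2)..1/sqrt 2}"
proof -
  let ?a = "1/sqrt 2"
  define h where "h k = cis (\<xi> * w k) * complex_of_real (w k)" for k
  have wc: "continuous_on S w" for S using continuous_on_subset[OF w_cont] by auto
  have hc: "continuous_on {0..pi} h" unfolding h_def[abs_def] by (intro continuous_intros wc)
  have sub: "kk ` {-?a..?a} \<subseteq> {0..pi}"
  proof
    fix y assume "y \<in> kk ` {-?a..?a}"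
    then obtain x where x: "x \<in> {-?a..?a}" "y = kk x" by blast
    have "x^2 \<le> 1/2" using xsq_le[OF x(1)] .
    thus "y \<in> {0..pi}" unfolding x(2) kk_def using arccos_bounded[OF yy_bound] by auto
  qed
  have der: "(kk has_field_derivative kd x) (at x within {-?a..?a})" if "x \<in> {-?a..?a} - {-?a, ?a}" for x
  proof -
    have "x \<in> {-?a<..<?a}" using that by auto
    hence "x^2 < 1/2" by (rule xsq_lt)
    thus ?thesis by (rule has_field_derivative_at_within[OF kk_deriv])
  qed
  have "((\<lambda>x. kd x *\<^sub>R h (kk x)) has_integral (integral {kk (-?a)..kk ?a} h - integral {kk ?a..kk (-?a)} h)) {-?a..?a}"
  proof (rule has_integral_substitution_general[of "{-?a, ?a}" "-?a" ?a kk 0 pi h kd])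
    show "finite {-?a, ?a}" by simp
    show "-?a \<le> ?a" by simp
    show "kk ` {-?a..?a} \<subseteq> {0..pi}" by (rule sub)
    show "continuous_on {0..pi} h" by (rule hc)
    show "continuous_on {-?a..?a} kk" by (rule kk_cont)
    fix x assume "x \<in> {-?a..?a} - {-?a, ?a}"
    thus "(kk has_field_derivative kd x) (at x within {-?a..?a})" by (rule der)
  qed
  moreover have "kk (-?a) = pi" "kk ?a = 0" unfolding kk_def yy_end by simp_all
  ultimately have "((\<lambda>x. kd x *\<^sub>R h (kk x)) has_integral (- QQ \<xi>)) {-?a..?a}"
    unfolding QQ_def h_def by simp
  thus ?thesis
  proof (rule has_integral_eq[rotated])
    fix x assume "x \<in> {-?a..?a}"
    hence "w (kk x) = x" using w_kk xsq_le by blast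
    thus "kd x *\<^sub>R h (kk x) = complex_of_real (kd x) * (cis (\<xi> * x) * complex_of_real x)"
      unfolding h_def by (simp add: scaleR_conv_of_real)
  qed
qed

lemma rhs_val:
  "integral {- 1 / sqrt 2 .. 1 / sqrt 2}
     (\<lambda>x::real. exp (\<i> * complex_of_real (\<xi> * x)) *
        complex_of_real (x / (pi * (1 - x\<^sup>2) * sqrt (1 - 2 * x\<^sup>2)))) = QQ \<xi> / pi"
proof -
  have "((\<lambda>x. complex_of_real (-1/pi) * (complex_of_real (kd x) * (cis (\<xi> * x) * complex_of_real x)))
      has_integral complex_of_real (-1/pi) * (- QQ \<xi>)) {-(1/sqrt 2)..1/sqrt 2}"
    by (rule has_integral_mult_right[OF sub_main])
  moreover have "complex_of_real (-1/pi) * (complex_of_real (kd x) * (cis (\<xi> * x) * complex_of_real x))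
      = exp (\<i> * complex_of_real (\<xi> * x)) * complex_of_real (x / (pi * (1 - x\<^sup>2) * sqrt (1 - 2 * x\<^sup>2)))" for x
  proof -
    have "(-1/pi) * kd x * x = x / (pi * (1 - x\<^sup>2) * sqrt (1 - 2 * x\<^sup>2))"
      unfolding kd_def by (simp add: divide_inverse mult_ac)
    hence "complex_of_real (-1/pi) * complex_of_real (kd x) * complex_of_real x = complex_of_real (x / (pi * (1 - x\<^sup>2) * sqrt (1 - 2 * x\<^sup>2)))"
      by (metis of_real_mult)
    hence eq: "complex_of_real (-1/pi) * complex_of_real (kd x) * complex_of_real x = complex_of_real (x / (pi * (1 - x\<^sup>2) * sqrt (1 - 2 * x\<^sup>2)))" .
    have "complex_of_real (-1/pi) * (complex_of_real (kd x) * (cis (\<xi> * x) * complex_of_real x))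
        = (complex_of_real (-1/pi) * complex_of_real (kd x) * complex_of_real x) * cis (\<xi> * x)"
      by (simp only: mult_ac)
    also have "\<dots> = complex_of_real (x / (pi * (1 - x\<^sup>2) * sqrt (1 - 2 * x\<^sup>2))) * cis (\<xi> * x)"
      by (simp only: eq)
    also have "\<dots> = exp (\<i> * complex_of_real (\<xi> * x)) * complex_of_real (x / (pi * (1 - x\<^sup>2) * sqrt (1 - 2 * x\<^sup>2)))"
      by (simp only: cis_conv_exp mult.commute)
    finally show ?thesis .
  qed
  ultimately have "((\<lambda>x. exp (\<i> * complex_of_real (\<xi> * x)) * complex_of_real (x / (pi * (1 - x\<^sup>2) * sqrt (1 - 2 * x\<^sup>2))))
      has_integral complex_of_real (-1/pi) * (- QQ \<xi>)) {- 1 / sqrt 2..1 / sqrt 2}"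
    by simp
  hence "integral {- 1 / sqrt 2 .. 1 / sqrt 2}
     (\<lambda>x::real. exp (\<i> * complex_of_real (\<xi> * x)) *
        complex_of_real (x / (pi * (1 - x\<^sup>2) * sqrt (1 - 2 * x\<^sup>2)))) = complex_of_real (-1/pi) * (- QQ \<xi>)"
    by (rule integral_unique)
  thus ?thesis by (simp add: field_simps)
qed

theorem mainTheorem10:
  fixes \<xi> :: real
  shows "(\<lambda>n::nat. (1/2) * (\<Sum>l = 0..n.
            exp (\<i> * complex_of_real (\<xi> * (real n - 2 * real l) / real n)) *
            complex_of_real ((pH l (n - l))\<^sup>2 - (qH l (n - l))\<^sup>2)))
         \<longlonglongrightarrow>
         - integral {- 1 / sqrt 2 .. 1 / sqrt 2}
             (\<lambda>x::real. exp (\<i> * complex_of_real (\<xi> * x)) *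
                complex_of_real (x / (pi * (1 - x\<^sup>2) * sqrt (1 - 2 * x\<^sup>2))))"
proof -
  have "(JJ \<xi> - JJ (-\<xi>)) / (4 * pi) = - (QQ \<xi> / pi)"
    unfolding JJ_diff Jdiff_Q by (simp add: field_simps)
  thus ?thesis using lhs_lim[of \<xi>] unfolding rhs_val by simp
qed

end
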